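(* Let $T>0$. The map $N$ defined, for $X\in\mathcal{D}([0,T],\mathcal{S}')$, by $N(X)_t=\int_0^t\tau_{t-s}(X_s)'\,ds$, i.e. $\langle N(X)_t,\phi\rangle=-\int_0^t\langle X_s,\tau_{t-s}\phi'\rangle\,ds$ for all $\phi\in\mathcal{S}$ and $t\in[0,T]$, is continuous from $\mathcal{D}([0,T],\mathcal{S}')$ into $\mathcal{C}([0,T],\mathcal{S}')$.
   Context: $\mathcal{S}$ is the Schwartz space on $\mathbb{R}$, $\mathcal{S}'$ the space of tempered distributions with duality $\langle\mu,\phi\rangle$. The distributional derivative $\mu'$ satisfies $\langle\mu',\phi\rangle=-\langle\mu,\phi'\rangle$; $\tau_x\phi(\cdot)=\phi(\cdot-x)$ and $\langle\tau_x\mu,\phi\rangle=\langle\mu,\tau_x\phi\rangle$. A path $X:[0,T]\to\mathcal{S}'$ belongs to $\mathcal{C}([0,T],\mathcal{S}')$ (resp. $\mathcal{D}([0,T],\mathcal{S}')$) iff $t\mapsto\langle X_t,\phi\rangle$ is continuous (resp. right-continuous with left limits) for every $\phi\in\mathcal{S}$; these spaces carry their usual (uniform, resp. Skorokhod) topologies. *)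

theory Defs
  imports "HOL-Analysis.Analysis"
begin

definition smooth_fun :: "(real \<Rightarrow> real) \<Rightarrow> bool" where
  "smooth_fun \<phi> \<longleftrightarrow>
     (\<forall>j x. ((deriv ^^ j) \<phi> has_real_derivative (deriv ^^ Suc j) \<phi> x) (at x))"

definition schwartz :: "(real \<Rightarrow> real) set" where
  "schwartz = {\<phi>. smooth_fun \<phi> \<and>
     (\<forall>j k. \<exists>C. \<forall>x. \<bar>x ^ k * (deriv ^^ j) \<phi> x\<bar> \<le> C)}"

definition schwartz_seminorm :: "nat \<Rightarrow> nat \<Rightarrow> (real \<Rightarrow> real) \<Rightarrow> real" where
  "schwartz_seminorm j k \<phi> = (SUP x. \<bar>x ^ k * (deriv ^^ j) \<phi> x\<bar>)"

definition schwartz_bounded :: "(real \<Rightarrow> real) set \<Rightarrow> bool" where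
  "schwartz_bounded B \<longleftrightarrow> B \<subseteq> schwartz \<and>
     (\<forall>j k. \<exists>C. \<forall>\<phi>\<in>B. \<forall>x. \<bar>x ^ k * (deriv ^^ j) \<phi> x\<bar> \<le> C)"

text \<open>Its values outside the Schwartz space are irrelevant.\<close>
definition tempered :: "((real \<Rightarrow> real) \<Rightarrow> real) \<Rightarrow> bool" where
  "tempered \<mu> \<longleftrightarrow>
     (\<forall>a b \<phi> \<psi>. \<phi> \<in> schwartz \<longrightarrow> \<psi> \<in> schwartz \<longrightarrow>
        \<mu> (\<lambda>x. a * \<phi> x + b * \<psi> x) = a * \<mu> \<phi> + b * \<mu> \<psi>) \<and>
     (\<exists>C n. \<forall>\<phi>\<in>schwartz.
        \<bar>\<mu> \<phi>\<bar> \<le> C * (\<Sum>j\<le>n. \<Sum>k\<le>n. schwartz_seminorm j k \<phi>))"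

definition transl :: "real \<Rightarrow> (real \<Rightarrow> real) \<Rightarrow> (real \<Rightarrow> real)" where
  "transl x \<phi> = (\<lambda>y. \<phi> (y - x))"

text \<open>Paths t in [0,T] to S' are functions real => S'; values outside [0,T] are ignored.\<close>

definition cadlag_on :: "real \<Rightarrow> (real \<Rightarrow> real) \<Rightarrow> bool" where
  "cadlag_on T f \<longleftrightarrow>
     (\<forall>t\<in>{0..<T}. (f \<longlongrightarrow> f t) (at_right t)) \<and>
     (\<forall>t\<in>{0<..T}. \<exists>l. (f \<longlongrightarrow> l) (at_left t))"

definition Dpaths :: "real \<Rightarrow> (real \<Rightarrow> (real \<Rightarrow> real) \<Rightarrow> real) set" where
  "Dpaths T = {X. (\<forall>t\<in>{0..T}. tempered (X t)) \<and>
                  (\<forall>\<phi>\<in>schwartz. cadlag_on T (\<lambda>t. X t \<phi>))}"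

definition Cpaths :: "real \<Rightarrow> (real \<Rightarrow> (real \<Rightarrow> real) \<Rightarrow> real) set" where
  "Cpaths T = {X. (\<forall>t\<in>{0..T}. tempered (X t)) \<and>
                  (\<forall>\<phi>\<in>schwartz. continuous_on {0..T} (\<lambda>t. X t \<phi>))}"

definition time_changes :: "real \<Rightarrow> (real \<Rightarrow> real) set" where
  "time_changes T = {r. strict_mono_on {0..T} r \<and> continuous_on {0..T} r \<and>
                        r ` {0..T} = {0..T}}"

text \<open>Skorokhod (J1) closeness w.r.t. the strong-dual seminorm |.|_B of a bounded
  set B: d_B(X,Y) \<le> delta, with
  d_B(X,Y) = inf over lambda of max(sup_t |lambda t - t|, sup_t sup_(phi in B) |X_t phi - Y_(lambda t) phi|).\<close>
definition skorokhod_close ::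
  "real \<Rightarrow> (real \<Rightarrow> real) set \<Rightarrow> real \<Rightarrow>
   (real \<Rightarrow> (real \<Rightarrow> real) \<Rightarrow> real) \<Rightarrow> (real \<Rightarrow> (real \<Rightarrow> real) \<Rightarrow> real) \<Rightarrow> bool" where
  "skorokhod_close T B \<delta> X Y \<longleftrightarrow>
     (\<exists>r\<in>time_changes T. \<forall>t\<in>{0..T}.
        \<bar>r t - t\<bar> \<le> \<delta> \<and> (\<forall>\<phi>\<in>B. \<bar>X t \<phi> - Y (r t) \<phi>\<bar> \<le> \<delta>))"

definition uniform_close ::
  "real \<Rightarrow> (real \<Rightarrow> real) set \<Rightarrow> real \<Rightarrow>
   (real \<Rightarrow> (real \<Rightarrow> real) \<Rightarrow> real) \<Rightarrow> (real \<Rightarrow> (real \<Rightarrow> real) \<Rightarrow> real) \<Rightarrow> bool" where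
  "uniform_close T B \<epsilon> X Y \<longleftrightarrow> (\<forall>t\<in>{0..T}. \<forall>\<phi>\<in>B. \<bar>X t \<phi> - Y t \<phi>\<bar> \<le> \<epsilon>)"

text \<open>Topological continuity of a map D([0,T],S') \<rightarrow> C([0,T],S'), both topologies being
  generated by the (directed) families of pseudometrics indexed by bounded B.\<close>
definition continuous_D_to_C ::
  "real \<Rightarrow> ((real \<Rightarrow> (real \<Rightarrow> real) \<Rightarrow> real) \<Rightarrow> (real \<Rightarrow> (real \<Rightarrow> real) \<Rightarrow> real)) \<Rightarrow> bool" where
  "continuous_D_to_C T F \<longleftrightarrow>
     (\<forall>X\<in>Dpaths T. F X \<in> Cpaths T) \<and>
     (\<forall>X\<in>Dpaths T. \<forall>B'. schwartz_bounded B' \<longrightarrow> (\<forall>\<epsilon>>0.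
        \<exists>B \<delta>. schwartz_bounded B \<and> \<delta> > 0 \<and>
          (\<forall>Y\<in>Dpaths T. skorokhod_close T B \<delta> X Y \<longrightarrow> uniform_close T B' \<epsilon> (F X) (F Y))))"

definition Nmap :: "(real \<Rightarrow> (real \<Rightarrow> real) \<Rightarrow> real) \<Rightarrow> (real \<Rightarrow> (real \<Rightarrow> real) \<Rightarrow> real)" where
  "Nmap X = (\<lambda>t \<phi>. - integral {0..t} (\<lambda>s. X s (transl (t - s) (deriv \<phi>))))"

end

theory Submission
  imports Defs
begin


abbreviation DD :: "nat \<Rightarrow> (real \<Rightarrow> real) \<Rightarrow> real \<Rightarrow> real" where
  "DD j f \<equiv> (deriv ^^ j) f"

definition qn :: "nat \<Rightarrow> (real \<Rightarrow> real) \<Rightarrow> real" where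
  "qn n \<phi> = (\<Sum>j\<le>n. \<Sum>k\<le>n. schwartz_seminorm j k \<phi>)"

lemma DD_Suc: "DD (Suc j) f = deriv (DD j f)"
  by simp

lemma schwartz_deriv:
  assumes "\<phi> \<in> schwartz"
  shows "(DD j \<phi> has_real_derivative DD (Suc j) \<phi> x) (at x)"
  using assms unfolding schwartz_def smooth_fun_def by blast

lemma schwartz_bound:
  assumes "\<phi> \<in> schwartz"
  shows "\<exists>C. \<forall>x. \<bar>x ^ k * DD j \<phi> x\<bar> \<le> C"
  using assms unfolding schwartz_def by blast

lemma sn_upper:
  assumes "\<phi> \<in> schwartz"
  shows "\<bar>x ^ k * DD j \<phi> x\<bar> \<le> schwartz_seminorm j k \<phi>"
proof -
  obtain C where "\<forall>x. \<bar>x ^ k * DD j \<phi> x\<bar> \<le> C" using schwartz_bound[OF assms] by blast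
  then have "bdd_above (range (\<lambda>x. \<bar>x ^ k * DD j \<phi> x\<bar>))" by (auto intro: bdd_aboveI2)
  then show ?thesis unfolding schwartz_seminorm_def
    using cSUP_upper[of x UNIV "\<lambda>x. \<bar>x ^ k * DD j \<phi> x\<bar>"] by auto
qed

lemma sn_nonneg:
  assumes "\<phi> \<in> schwartz"
  shows "0 \<le> schwartz_seminorm j k \<phi>"
  using sn_upper[OF assms, of 0 k j] by linarith

lemma sn_least:
  assumes "\<And>x. \<bar>x ^ k * DD j \<phi> x\<bar> \<le> c"
  shows "schwartz_seminorm j k \<phi> \<le> c"
  unfolding schwartz_seminorm_def by (rule cSUP_least) (use assms in auto)

lemma qn_nonneg: "\<phi> \<in> schwartz \<Longrightarrow> 0 \<le> qn n \<phi>"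
  unfolding qn_def by (intro sum_nonneg sn_nonneg)

lemma sn_le_qn:
  assumes "\<phi> \<in> schwartz" "j \<le> n" "k \<le> n"
  shows "schwartz_seminorm j k \<phi> \<le> qn n \<phi>"
proof -
  have "schwartz_seminorm j k \<phi> \<le> (\<Sum>k\<le>n. schwartz_seminorm j k \<phi>)"
    by (rule member_le_sum) (use assms sn_nonneg in auto)
  also have "\<dots> \<le> qn n \<phi>" unfolding qn_def
    by (rule member_le_sum[where f="\<lambda>j. \<Sum>k\<le>n. schwartz_seminorm j k \<phi>"])
       (use assms sn_nonneg in \<open>auto intro: sum_nonneg\<close>)
  finally show ?thesis .
qed

lemma qn_mono:
  assumes "\<phi> \<in> schwartz" "m \<le> n"
  shows "qn m \<phi> \<le> qn n \<phi>"
proof -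
  have "qn m \<phi> \<le> (\<Sum>j\<le>m. \<Sum>k\<le>n. schwartz_seminorm j k \<phi>)"
    unfolding qn_def by (intro sum_mono sum_mono2) (use assms sn_nonneg in auto)
  also have "\<dots> \<le> qn n \<phi>" unfolding qn_def
    by (intro sum_mono2) (use assms sn_nonneg in \<open>auto intro: sum_nonneg\<close>)
  finally show ?thesis .
qed

lemma qn_le:
  assumes "\<And>j k x. j \<le> n \<Longrightarrow> k \<le> n \<Longrightarrow> \<bar>x ^ k * DD j \<phi> x\<bar> \<le> c"
  shows "qn n \<phi> \<le> (real n + 1)^2 * c"
proof -
  have "qn n \<phi> \<le> (\<Sum>j\<le>n. \<Sum>k\<le>n. c)"
    unfolding qn_def by (intro sum_mono sn_least assms) auto
  also have "\<dots> = (real n + 1)^2 * c" by (simp add: power2_eq_square algebra_simps)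
  finally show ?thesis .
qed

lemma tempered_lin:
  assumes "tempered \<mu>" "\<phi> \<in> schwartz" "\<psi> \<in> schwartz"
  shows "\<mu> (\<lambda>x. a * \<phi> x + b * \<psi> x) = a * \<mu> \<phi> + b * \<mu> \<psi>"
  using assms unfolding tempered_def by blast

lemma tempered_diff:
  assumes "tempered \<mu>" "\<phi> \<in> schwartz" "\<psi> \<in> schwartz"
  shows "\<mu> (\<lambda>x. \<phi> x - \<psi> x) = \<mu> \<phi> - \<mu> \<psi>"
  using tempered_lin[OF assms, of 1 "-1"] by simp

lemma tempered_add:
  assumes "tempered \<mu>" "\<phi> \<in> schwartz" "\<psi> \<in> schwartz"
  shows "\<mu> (\<lambda>x. \<phi> x + \<psi> x) = \<mu> \<phi> + \<mu> \<psi>"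
  using tempered_lin[OF assms, of 1 1] by simp

lemma tempered_scale:
  assumes "tempered \<mu>" "\<phi> \<in> schwartz"
  shows "\<mu> (\<lambda>x. c * \<phi> x) = c * \<mu> \<phi>"
  using tempered_lin[OF assms assms(2), of c 0] by simp

lemma tempered_bound:
  assumes "tempered \<mu>"
  obtains C n where "C \<ge> 0" "\<And>\<phi>. \<phi> \<in> schwartz \<Longrightarrow> \<bar>\<mu> \<phi>\<bar> \<le> C * qn n \<phi>"
proof -
  obtain C n where h: "\<forall>\<phi>\<in>schwartz. \<bar>\<mu> \<phi>\<bar> \<le> C * qn n \<phi>"
    using assms unfolding tempered_def qn_def by blast
  show ?thesis
  proof (rule that[of "max C 0" n])
    fix \<phi> assume "\<phi> \<in> schwartz"
    then have "\<bar>\<mu> \<phi>\<bar> \<le> C * qn n \<phi>" "0 \<le> qn n \<phi>" using h qn_nonneg by auto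
    then show "\<bar>\<mu> \<phi>\<bar> \<le> max C 0 * qn n \<phi>"
      by (smt (verit) mult_right_mono max.cobounded1)
  qed auto
qed

lemma DD_lin:
  assumes "\<phi> \<in> schwartz" "\<psi> \<in> schwartz"
  shows "DD j (\<lambda>x. a * \<phi> x + b * \<psi> x) = (\<lambda>x. a * DD j \<phi> x + b * DD j \<psi> x)"
proof (induction j)
  case 0 then show ?case by simp
next
  case (Suc j)
  have "deriv (\<lambda>x. a * DD j \<phi> x + b * DD j \<psi> x) x = a * DD (Suc j) \<phi> x + b * DD (Suc j) \<psi> x" for x
    by (rule DERIV_imp_deriv) (intro DERIV_add DERIV_cmult schwartz_deriv assms)
  moreover have "DD (Suc j) (\<lambda>x. a * \<phi> x + b * \<psi> x) = deriv (\<lambda>x. a * DD j \<phi> x + b * DD j \<psi> x)"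
    using Suc.IH by simp
  ultimately show ?case by (simp add: fun_eq_iff)
qed

lemma schwartz_lin:
  assumes "\<phi> \<in> schwartz" "\<psi> \<in> schwartz"
  shows "(\<lambda>x. a * \<phi> x + b * \<psi> x) \<in> schwartz"
  unfolding schwartz_def smooth_fun_def
proof (intro CollectI conjI allI)
  fix j x
  show "(DD j (\<lambda>x. a * \<phi> x + b * \<psi> x) has_real_derivative DD (Suc j) (\<lambda>x. a * \<phi> x + b * \<psi> x) x) (at x)"
    unfolding DD_lin[OF assms]
    by (intro DERIV_add DERIV_cmult schwartz_deriv assms)
next
  fix j k
  obtain C1 where C1: "\<forall>x. \<bar>x ^ k * DD j \<phi> x\<bar> \<le> C1" using schwartz_bound[OF assms(1)] by blast
  obtain C2 where C2: "\<forall>x. \<bar>x ^ k * DD j \<psi> x\<bar> \<le> C2" using schwartz_bound[OF assms(2)] by blast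
  have H: "\<forall>x. \<bar>x ^ k * DD j (\<lambda>x. a * \<phi> x + b * \<psi> x) x\<bar> \<le> \<bar>a\<bar> * C1 + \<bar>b\<bar> * C2"
  proof
    fix x
    have "\<bar>x ^ k * DD j (\<lambda>x. a * \<phi> x + b * \<psi> x) x\<bar> = \<bar>a * (x ^ k * DD j \<phi> x) + b * (x ^ k * DD j \<psi> x)\<bar>"
      unfolding DD_lin[OF assms] by (simp add: algebra_simps)
    also have "\<dots> \<le> \<bar>a\<bar> * \<bar>x ^ k * DD j \<phi> x\<bar> + \<bar>b\<bar> * \<bar>x ^ k * DD j \<psi> x\<bar>"
      using abs_triangle_ineq[of "a * (x^k * DD j \<phi> x)" "b * (x^k * DD j \<psi> x)"] by (simp add: abs_mult)
    also have "\<dots> \<le> \<bar>a\<bar> * C1 + \<bar>b\<bar> * C2"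
      using C1 C2 by (intro add_mono mult_left_mono) auto
    finally show "\<bar>x ^ k * DD j (\<lambda>x. a * \<phi> x + b * \<psi> x) x\<bar> \<le> \<bar>a\<bar> * C1 + \<bar>b\<bar> * C2" .
  qed
  then show "\<exists>C. \<forall>x. \<bar>x ^ k * DD j (\<lambda>x. a * \<phi> x + b * \<psi> x) x\<bar> \<le> C" by (rule exI)
qed

lemma schwartz_diff: "\<phi> \<in> schwartz \<Longrightarrow> \<psi> \<in> schwartz \<Longrightarrow> (\<lambda>x. \<phi> x - \<psi> x) \<in> schwartz"
  using schwartz_lin[of \<phi> \<psi> 1 "-1"] by simp
lemma schwartz_add: "\<phi> \<in> schwartz \<Longrightarrow> \<psi> \<in> schwartz \<Longrightarrow> (\<lambda>x. \<phi> x + \<psi> x) \<in> schwartz"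
  using schwartz_lin[of \<phi> \<psi> 1 1] by simp
lemma schwartz_scale: "\<phi> \<in> schwartz \<Longrightarrow> (\<lambda>x. c * \<phi> x) \<in> schwartz"
  using schwartz_lin[of \<phi> \<phi> c 0] by simp
lemma DD_diff: "\<phi> \<in> schwartz \<Longrightarrow> \<psi> \<in> schwartz \<Longrightarrow> DD j (\<lambda>x. \<phi> x - \<psi> x) = (\<lambda>x. DD j \<phi> x - DD j \<psi> x)"
  using DD_lin[of \<phi> \<psi> j 1 "-1"] by simp
lemma DD_add: "\<phi> \<in> schwartz \<Longrightarrow> \<psi> \<in> schwartz \<Longrightarrow> DD j (\<lambda>x. \<phi> x + \<psi> x) = (\<lambda>x. DD j \<phi> x + DD j \<psi> x)"
  using DD_lin[of \<phi> \<psi> j 1 1] by simp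
lemma DD_scale: "\<phi> \<in> schwartz \<Longrightarrow> DD j (\<lambda>x. c * \<phi> x) = (\<lambda>x. c * DD j \<phi> x)"
  using DD_lin[of \<phi> \<phi> j c 0] by simp

lemma qn_scale_le:
  assumes "\<phi> \<in> schwartz"
  shows "qn n (\<lambda>x. c * \<phi> x) \<le> \<bar>c\<bar> * qn n \<phi>"
proof -
  have "qn n (\<lambda>x. c * \<phi> x) \<le> (\<Sum>j\<le>n. \<Sum>k\<le>n. \<bar>c\<bar> * schwartz_seminorm j k \<phi>)"
    unfolding qn_def
  proof (intro sum_mono sn_least)
    fix j k x
    have "\<bar>x ^ k * DD j (\<lambda>x. c * \<phi> x) x\<bar> = \<bar>c\<bar> * \<bar>x ^ k * DD j \<phi> x\<bar>"
      unfolding DD_scale[OF assms] by (simp add: abs_mult)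
    also have "\<dots> \<le> \<bar>c\<bar> * schwartz_seminorm j k \<phi>"
      by (intro mult_left_mono sn_upper assms) auto
    finally show "\<bar>x ^ k * DD j (\<lambda>x. c * \<phi> x) x\<bar> \<le> \<bar>c\<bar> * schwartz_seminorm j k \<phi>" .
  qed
  also have "\<dots> = \<bar>c\<bar> * qn n \<phi>" unfolding qn_def by (simp add: sum_distrib_left)
  finally show ?thesis .
qed

lemma DD_deriv: "DD j (deriv \<phi>) = DD (Suc j) \<phi>"
  by (simp add: funpow_Suc_right del: funpow.simps)

lemma schwartz_deriv_in: "\<phi> \<in> schwartz \<Longrightarrow> deriv \<phi> \<in> schwartz"
proof -
  assume a: "\<phi> \<in> schwartz"
  have "(DD j (deriv \<phi>) has_real_derivative DD (Suc j) (deriv \<phi>) x) (at x)" for j x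
    unfolding DD_deriv by (rule schwartz_deriv[OF a])
  moreover have "\<exists>C. \<forall>x. \<bar>x ^ k * DD j (deriv \<phi>) x\<bar> \<le> C" for j k
    unfolding DD_deriv by (rule schwartz_bound[OF a])
  ultimately show ?thesis unfolding schwartz_def smooth_fun_def by blast
qed


lemma pow_shift_le:
  fixes x y c :: real
  assumes "\<bar>x - y\<bar> \<le> c"
  shows "\<bar>x\<bar> ^ k \<le> 2 ^ k * (\<bar>y\<bar> ^ k + c ^ k)"
proof -
  have c0: "0 \<le> c" using assms by linarith
  have "\<bar>x\<bar> \<le> 2 * max \<bar>y\<bar> c" using assms by linarith
  then have "\<bar>x\<bar> ^ k \<le> (2 * max \<bar>y\<bar> c) ^ k" by (intro power_mono) auto
  also have "\<dots> = 2 ^ k * max \<bar>y\<bar> c ^ k" by (simp add: power_mult_distrib)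
  also have "max \<bar>y\<bar> c ^ k \<le> \<bar>y\<bar> ^ k + c ^ k"
    using c0 by (cases "\<bar>y\<bar> \<le> c") (auto simp: max_def)
  finally show ?thesis by simp
qed

lemma deriv_shift:
  assumes "(f has_real_derivative d) (at (x - a))"
  shows "((\<lambda>y. f (y - a)) has_real_derivative d) (at x)"
  using DERIV_shift[of f d x "-a"] assms by simp

lemma DD_transl: 
  assumes "\<phi> \<in> schwartz"
  shows "DD j (transl a \<phi>) = transl a (DD j \<phi>)"
proof (induction j)
  case 0 then show ?case by simp
next
  case (Suc j)
  have "((\<lambda>y. DD j \<phi> (y - a)) has_real_derivative DD (Suc j) \<phi> (x - a)) (at x)" for x
    by (rule deriv_shift[OF schwartz_deriv[OF assms]])
  then have "deriv (transl a (DD j \<phi>)) x = transl a (DD (Suc j) \<phi>) x" for x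
    unfolding transl_def by (rule DERIV_imp_deriv)
  moreover have "DD (Suc j) (transl a \<phi>) = deriv (transl a (DD j \<phi>))"
    using Suc.IH by simp
  ultimately show ?case by (simp add: fun_eq_iff)
qed

lemma transl_bound:
  fixes f :: "real \<Rightarrow> real" and x a T c0 c1 :: real
  assumes "\<forall>y. \<bar>y ^ k * f y\<bar> \<le> c1" "\<forall>y. \<bar>f y\<bar> \<le> c0" "\<bar>a\<bar> \<le> T"
  shows "\<bar>x ^ k * f (x - a)\<bar> \<le> 2 ^ k * (c1 + T ^ k * c0)"
proof -
  have "\<bar>x\<bar> ^ k \<le> 2 ^ k * (\<bar>x - a\<bar> ^ k + T ^ k)"
    by (rule pow_shift_le) (use assms in auto)
  then have "\<bar>x ^ k * f (x - a)\<bar> \<le> 2 ^ k * (\<bar>x - a\<bar> ^ k + T ^ k) * \<bar>f (x - a)\<bar>"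
    by (simp add: abs_mult power_abs mult_right_mono)
  also have "\<dots> = 2 ^ k * (\<bar>(x - a) ^ k * f (x - a)\<bar> + T ^ k * \<bar>f (x - a)\<bar>)"
    by (simp add: abs_mult power_abs algebra_simps)
  also have "\<dots> \<le> 2 ^ k * (c1 + T ^ k * c0)"
    using assms by (intro mult_left_mono add_mono) (auto intro: mult_left_mono)
  finally show ?thesis .
qed

lemma schwartz_transl:
  assumes "\<phi> \<in> schwartz"
  shows "transl a \<phi> \<in> schwartz"
  unfolding schwartz_def smooth_fun_def
proof (intro CollectI conjI allI)
  fix j x
  show "(DD j (transl a \<phi>) has_real_derivative DD (Suc j) (transl a \<phi>) x) (at x)"
    unfolding DD_transl[OF assms] unfolding transl_def
    by (rule deriv_shift[OF schwartz_deriv[OF assms]])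
next
  fix j k
  obtain c1 where c1: "\<forall>x. \<bar>x ^ k * DD j \<phi> x\<bar> \<le> c1" using schwartz_bound[OF assms] by blast
  obtain c0 where c0: "\<forall>x. \<bar>x ^ 0 * DD j \<phi> x\<bar> \<le> c0" using schwartz_bound[OF assms] by blast
  have "\<forall>x. \<bar>x ^ k * DD j (transl a \<phi>) x\<bar> \<le> 2 ^ k * (c1 + \<bar>a\<bar> ^ k * c0)"
    unfolding DD_transl[OF assms] unfolding transl_def
    using transl_bound[of k "DD j \<phi>" c1 c0 a "\<bar>a\<bar>"] c1 c0 by auto
  then show "\<exists>C. \<forall>x. \<bar>x ^ k * DD j (transl a \<phi>) x\<bar> \<le> C" by (rule exI)
qed

lemma real_lipschitz:
  fixes h h' :: "real \<Rightarrow> real"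
  assumes "\<And>x. (h has_real_derivative h' x) (at x)" "\<And>x. \<bar>h' x\<bar> \<le> L"
  shows "\<bar>h x - h y\<bar> \<le> L * \<bar>x - y\<bar>"
proof -
  have *: "\<bar>h v - h u\<bar> \<le> L * \<bar>v - u\<bar>" if uv: "u < v" for u v
  proof -
    obtain z where "h v - h u = (v - u) * h' z" using MVT2[OF uv, of h h'] assms by blast
    then have "\<bar>h v - h u\<bar> = \<bar>v - u\<bar> * \<bar>h' z\<bar>" by (simp add: abs_mult)
    also have "\<dots> \<le> \<bar>v - u\<bar> * L" by (intro mult_left_mono assms) auto
    finally show ?thesis by (simp add: mult.commute)
  qed
  consider "x < y" | "x = y" | "y < x" by linarith
  then show ?thesis
  proof cases
    case 1 then show ?thesis using *[OF 1] by (simp add: abs_minus_commute)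
  next
    case 2 then show ?thesis using assms(2)[of 0] by simp
  next
    case 3 then show ?thesis using *[OF 3] by simp
  qed
qed

lemma transl_diff_bound:
  fixes f f' :: "real \<Rightarrow> real" and x a b T c0 c1 :: real
  assumes "\<And>y. (f has_real_derivative f' y) (at y)"
    and "\<forall>y. \<bar>y ^ k * f' y\<bar> \<le> c1" "\<forall>y. \<bar>f' y\<bar> \<le> c0" "\<bar>a\<bar> \<le> T" "\<bar>b\<bar> \<le> T"
  shows "\<bar>x ^ k * (f (x - a) - f (x - b))\<bar> \<le> \<bar>a - b\<bar> * (2 ^ k * (c1 + T ^ k * c0))"
proof (cases "a = b")
  case True then show ?thesis by simp
next
  case False
  define u where "u = min (x - a) (x - b)"
  define v where "v = max (x - a) (x - b)"
  have uv: "u < v" using False unfolding u_def v_def by (auto simp: min_def max_def)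
  obtain z where z: "u < z" "z < v" "f v - f u = (v - u) * f' z" using MVT2[OF uv, of f f'] assms(1) by blast
  have e1: "\<bar>f (x - a) - f (x - b)\<bar> = \<bar>f v - f u\<bar>"
    unfolding u_def v_def by (cases "x - a \<le> x - b") (auto simp: min_def max_def abs_minus_commute)
  have e2: "\<bar>v - u\<bar> = \<bar>a - b\<bar>"
    unfolding u_def v_def by (cases "x - a \<le> x - b") (auto simp: min_def max_def abs_minus_commute)
  have "\<bar>f (x - a) - f (x - b)\<bar> = \<bar>a - b\<bar> * \<bar>f' z\<bar>"
    unfolding e1 z(3) abs_mult e2 ..
  then have "\<bar>x ^ k * (f (x - a) - f (x - b))\<bar> = \<bar>a - b\<bar> * \<bar>x ^ k * f' z\<bar>"
    by (simp add: abs_mult)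
  also have "\<bar>x ^ k * f' z\<bar> = \<bar>x ^ k * f' (x - (x - z))\<bar>" by simp
  also have "\<dots> \<le> 2 ^ k * (c1 + T ^ k * c0)"
    by (rule transl_bound) (use assms z in \<open>auto simp: u_def v_def\<close>)
  finally show ?thesis by (simp add: mult_left_mono)
qed


lemmas hk_integrable_combine = Henstock_Kurzweil_Integration.integrable_combine
lemmas hk_integral_combine = Henstock_Kurzweil_Integration.integral_combine

lemma partition_lemma:
  fixes G :: "real \<Rightarrow> 'i \<Rightarrow> real" and T \<eta> :: real
  assumes RC: "\<And>s \<eta>. s \<in> {0..<T} \<Longrightarrow> \<eta> > 0 \<Longrightarrow>
      \<exists>b>s. \<forall>u. s \<le> u \<and> u < b \<and> u \<le> T \<longrightarrow> (\<forall>i\<in>I. \<bar>G u i - G s i\<bar> \<le> \<eta>)"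
    and LC: "\<And>s \<eta>. s \<in> {0<..T} \<Longrightarrow> \<eta> > 0 \<Longrightarrow>
      \<exists>b<s. \<forall>u w. b < u \<and> u < s \<and> b < w \<and> w < s \<and> 0 \<le> u \<and> 0 \<le> w \<longrightarrow> (\<forall>i\<in>I. \<bar>G u i - G w i\<bar> \<le> \<eta>)"
    and eta: "\<eta> > 0"
  shows "\<exists>A. finite A \<and> (\<forall>s u. 0 \<le> s \<and> s \<le> u \<and> u < T \<and> (\<forall>a\<in>A. \<not> (s < a \<and> a \<le> u)) \<longrightarrow>
            (\<forall>i\<in>I. \<bar>G s i - G u i\<bar> \<le> \<eta>))"
proof -
  define P where "P s r \<longleftrightarrow> r > 0 \<and>
     (s < T \<longrightarrow> (\<forall>u. s \<le> u \<and> u < s + r \<and> u \<le> T \<longrightarrow> (\<forall>i\<in>I. \<bar>G u i - G s i\<bar> \<le> \<eta>/2))) \<and>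
     (0 < s \<longrightarrow> (\<forall>u w. s - r < u \<and> u < s \<and> s - r < w \<and> w < s \<and> 0 \<le> u \<and> 0 \<le> w \<longrightarrow> (\<forall>i\<in>I. \<bar>G u i - G w i\<bar> \<le> \<eta>)))"
    for s r
  have "\<exists>r. P s r" if s: "s \<in> {0..T}" for s
  proof -
    obtain r1 where r1: "r1 > 0" "s < T \<longrightarrow> (\<forall>u. s \<le> u \<and> u < s + r1 \<and> u \<le> T \<longrightarrow> (\<forall>i\<in>I. \<bar>G u i - G s i\<bar> \<le> \<eta>/2))"
    proof (cases "s < T")
      case True
      then obtain b where "b > s" "\<forall>u. s \<le> u \<and> u < b \<and> u \<le> T \<longrightarrow> (\<forall>i\<in>I. \<bar>G u i - G s i\<bar> \<le> \<eta>/2)"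
        using RC[of s "\<eta>/2"] s eta by auto
      then show ?thesis using that[of "b - s"] by auto
    next
      case False then show ?thesis using that[of 1] by auto
    qed
    obtain r2 where r2: "r2 > 0" "0 < s \<longrightarrow> (\<forall>u w. s - r2 < u \<and> u < s \<and> s - r2 < w \<and> w < s \<and> 0 \<le> u \<and> 0 \<le> w \<longrightarrow> (\<forall>i\<in>I. \<bar>G u i - G w i\<bar> \<le> \<eta>))"
    proof (cases "0 < s")
      case True
      then obtain b where "b < s" "\<forall>u w. b < u \<and> u < s \<and> b < w \<and> w < s \<and> 0 \<le> u \<and> 0 \<le> w \<longrightarrow> (\<forall>i\<in>I. \<bar>G u i - G w i\<bar> \<le> \<eta>)"
        using LC[of s \<eta>] s eta by auto
      then show ?thesis using that[of "s - b"] by auto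
    next
      case False then show ?thesis using that[of 1] by auto
    qed
    have A1: "\<forall>u. s \<le> u \<and> u < s + min r1 r2 \<and> u \<le> T \<longrightarrow> (\<forall>i\<in>I. \<bar>G u i - G s i\<bar> \<le> \<eta>/2)" if "s < T"
    proof (intro allI impI)
      fix u assume "s \<le> u \<and> u < s + min r1 r2 \<and> u \<le> T"
      then have "s \<le> u \<and> u < s + r1 \<and> u \<le> T" by auto
      then show "\<forall>i\<in>I. \<bar>G u i - G s i\<bar> \<le> \<eta>/2" using r1(2) that by blast
    qed
    have A2: "\<forall>u w. s - min r1 r2 < u \<and> u < s \<and> s - min r1 r2 < w \<and> w < s \<and> 0 \<le> u \<and> 0 \<le> w \<longrightarrow> (\<forall>i\<in>I. \<bar>G u i - G w i\<bar> \<le> \<eta>)" if "0 < s"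
    proof (intro allI impI)
      fix u w assume "s - min r1 r2 < u \<and> u < s \<and> s - min r1 r2 < w \<and> w < s \<and> 0 \<le> u \<and> 0 \<le> w"
      then have "s - r2 < u \<and> u < s \<and> s - r2 < w \<and> w < s \<and> 0 \<le> u \<and> 0 \<le> w" by auto
      then show "\<forall>i\<in>I. \<bar>G u i - G w i\<bar> \<le> \<eta>" using r2(2) that by blast
    qed
    have "P s (min r1 r2)" unfolding P_def using r1(1) r2(1) A1 A2 by auto
    then show ?thesis by blast
  qed
  then obtain \<rho> where \<rho>: "\<And>s. s \<in> {0..T} \<Longrightarrow> P s (\<rho> s)" by metis
  have "{0..T} \<subseteq> (\<Union>s\<in>{0..T}. ball s (\<rho> s))"
  proof
    fix s assume s: "s \<in> {0..T}"
    then have "\<rho> s > 0" using \<rho> unfolding P_def by blast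
    then have "s \<in> ball s (\<rho> s)" by simp
    then show "s \<in> (\<Union>s\<in>{0..T}. ball s (\<rho> s))" using s by blast
  qed
  then obtain C where C: "C \<subseteq> {0..T}" "finite C" "{0..T} \<subseteq> (\<Union>s\<in>C. ball s (\<rho> s))"
    using compactE_image[of "{0..T}" "{0..T}" "\<lambda>s. ball s (\<rho> s)"] by auto
  define A where "A = C \<union> (\<lambda>s. s + \<rho> s) ` C"
  have "finite A" unfolding A_def using C by auto
  moreover have "\<forall>i\<in>I. \<bar>G s i - G u i\<bar> \<le> \<eta>"
    if su: "0 \<le> s" "s \<le> u" "u < T" and noA: "\<forall>a\<in>A. \<not> (s < a \<and> a \<le> u)" for s u
  proof -
    have "s \<in> {0..T}" using su by auto
    then have "s \<in> (\<Union>s\<in>C. ball s (\<rho> s))" using C(3) by blast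
    then obtain c where c: "c \<in> C" "s \<in> ball c (\<rho> c)" by blast
    have cT: "c \<in> {0..T}" using c C(1) by auto
    have Pc: "P c (\<rho> c)" using \<rho>[OF cT] .
    have dist: "\<bar>s - c\<bar> < \<rho> c" using c(2) by (simp add: dist_real_def abs_minus_commute)
    show ?thesis
    proof (cases "s < c")
      case True
      have "\<not> (c \<le> u)" using noA True c(1) unfolding A_def by auto
      then have "u < c" by simp
      moreover have "0 < c" using True su by linarith
      ultimately have L: "\<forall>u w. c - \<rho> c < u \<and> u < c \<and> c - \<rho> c < w \<and> w < c \<and> 0 \<le> u \<and> 0 \<le> w \<longrightarrow> (\<forall>i\<in>I. \<bar>G u i - G w i\<bar> \<le> \<eta>)"
        using Pc unfolding P_def by blast
      have "c - \<rho> c < s \<and> s < c \<and> c - \<rho> c < u \<and> u < c \<and> 0 \<le> s \<and> 0 \<le> u"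
        using dist True su \<open>u < c\<close> by auto
      with L show ?thesis by blast
    next
      case False
      then have cs: "c \<le> s" by simp
      have "u < c + \<rho> c"
      proof (rule ccontr)
        assume "\<not> u < c + \<rho> c"
        then have "s < c + \<rho> c \<and> c + \<rho> c \<le> u" using dist cs by auto
        then show False using noA c(1) unfolding A_def by auto
      qed
      moreover have "c < T" using cs su by linarith
      moreover have L: "\<forall>u. c \<le> u \<and> u < c + \<rho> c \<and> u \<le> T \<longrightarrow> (\<forall>i\<in>I. \<bar>G u i - G c i\<bar> \<le> \<eta>/2)"
        using Pc \<open>c < T\<close> unfolding P_def by blast
      moreover have "c \<le> s \<and> s < c + \<rho> c \<and> s \<le> T" using cs dist su by auto
      ultimately have h: "\<forall>i\<in>I. \<bar>G u i - G c i\<bar> \<le> \<eta>/2" "\<forall>i\<in>I. \<bar>G s i - G c i\<bar> \<le> \<eta>/2"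
        using cs su by (metis order.trans less_imp_le)+
      show ?thesis
      proof
        fix i assume "i \<in> I"
        then have "\<bar>G u i - G c i\<bar> \<le> \<eta>/2" "\<bar>G s i - G c i\<bar> \<le> \<eta>/2" using h by auto
        then show "\<bar>G s i - G u i\<bar> \<le> \<eta>" by linarith
      qed
    qed
  qed
  ultimately show ?thesis by blast
qed

lemma step_approx:
  fixes f :: "real \<Rightarrow> real"
  assumes "finite A" "\<eta> \<ge> 0"
  shows "a \<le> b \<Longrightarrow> (\<forall>s u. a \<le> s \<and> s \<le> u \<and> u < b \<and> (\<forall>x\<in>A. \<not> (s < x \<and> x \<le> u)) \<longrightarrow> \<bar>f s - f u\<bar> \<le> \<eta>)
    \<Longrightarrow> \<exists>g. g integrable_on {a..b} \<and> (\<forall>x\<in>{a..b}. \<bar>f x - g x\<bar> \<le> \<eta>)"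
proof (induction "card (A \<inter> {a<..<b})" arbitrary: a b rule: less_induct)
  case less
  show ?case
  proof (cases "A \<inter> {a<..<b} = {}")
    case True
    define g where "g x = (if x = b then f b else f a)" for x
    have "g integrable_on {a..b}"
      by (rule integrable_spike_finite[of "{b}" _ _ "\<lambda>x. f a"]) (auto simp: g_def)
    moreover have "\<bar>f x - g x\<bar> \<le> \<eta>" if x: "x \<in> {a..b}" for x
    proof (cases "x = b")
      case True then show ?thesis using assms by (simp add: g_def)
    next
      case False
      then have "x < b" using x by auto
      then have "\<forall>y\<in>A. \<not> (a < y \<and> y \<le> x)" using True by auto
      then have "\<bar>f a - f x\<bar> \<le> \<eta>" using less.prems x \<open>x < b\<close> by auto
      then show ?thesis using False by (simp add: g_def abs_minus_commute)
    qed
    ultimately show ?thesis by blast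
  next
    case False
    then obtain c where c: "c \<in> A" "a < c" "c < b" by auto
    have fin: "finite (A \<inter> {a<..<b})" using assms by auto
    have "card (A \<inter> {a<..<c}) < card (A \<inter> {a<..<b})"
      by (rule psubset_card_mono[OF fin]) (use c in auto)
    then obtain g1 where g1: "g1 integrable_on {a..c}" "\<forall>x\<in>{a..c}. \<bar>f x - g1 x\<bar> \<le> \<eta>"
      using less.hyps[of a c] less.prems c by auto
    have "card (A \<inter> {c<..<b}) < card (A \<inter> {a<..<b})"
      by (rule psubset_card_mono[OF fin]) (use c in auto)
    then obtain g2 where g2: "g2 integrable_on {c..b}" "\<forall>x\<in>{c..b}. \<bar>f x - g2 x\<bar> \<le> \<eta>"
      using less.hyps[of c b] less.prems c by auto
    define g where "g x = (if x < c then g1 x else g2 x)" for x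
    have "g integrable_on {a..c}"
      by (rule integrable_spike_finite[of "{c}" _ _ g1]) (use g1 in \<open>auto simp: g_def\<close>)
    moreover have "g integrable_on {c..b}"
      by (rule integrable_spike_finite[of "{}" _ _ g2]) (use g2 in \<open>auto simp: g_def\<close>)
    ultimately have "g integrable_on {a..b}"
      using c by (intro hk_integrable_combine[where a=a and c=c and b=b]) auto
    moreover have "\<forall>x\<in>{a..b}. \<bar>f x - g x\<bar> \<le> \<eta>"
      using g1(2) g2(2) by (auto simp: g_def)
    ultimately show ?thesis by blast
  qed
qed

lemma integrable_regulated:
  fixes f :: "real \<Rightarrow> real"
  assumes "a \<le> b"
    and H: "\<And>\<eta>. \<eta> > 0 \<Longrightarrow> \<exists>A. finite A \<and> (\<forall>s u. a \<le> s \<and> s \<le> u \<and> u < b \<and> (\<forall>x\<in>A. \<not> (s < x \<and> x \<le> u)) \<longrightarrow> \<bar>f s - f u\<bar> \<le> \<eta>)"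
  shows "f integrable_on {a..b}"
proof -
  have "\<exists>g. (\<forall>x\<in>cbox a b. norm (f x - g x) \<le> e) \<and> g integrable_on cbox a b" if e: "e > 0" for e
  proof -
    obtain A where A: "finite A" "\<forall>s u. a \<le> s \<and> s \<le> u \<and> u < b \<and> (\<forall>x\<in>A. \<not> (s < x \<and> x \<le> u)) \<longrightarrow> \<bar>f s - f u\<bar> \<le> e"
      using H[OF e] by blast
    from step_approx[OF A(1), where \<eta>=e and a=a and b=b and f=f] A(2) assms(1) e
    obtain g where "g integrable_on {a..b}" "\<forall>x\<in>{a..b}. \<bar>f x - g x\<bar> \<le> e" by auto
    then show ?thesis by auto
  qed
  then have "f integrable_on cbox a b" by (rule integrable_uniform_limit)
  then show ?thesis by simp
qed

lemma cadlag_right: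
  assumes "cadlag_on T f" "s \<in> {0..<T}" "\<eta> > 0"
  shows "\<exists>b>s. \<forall>u. s \<le> u \<and> u < b \<longrightarrow> \<bar>f u - f s\<bar> < \<eta>"
proof -
  have "(f \<longlongrightarrow> f s) (at_right s)" using assms unfolding cadlag_on_def by auto
  then have "eventually (\<lambda>u. dist (f u) (f s) < \<eta>) (at_right s)" using assms(3) by (rule tendstoD)
  then obtain b where "b > s" "\<forall>y>s. y < b \<longrightarrow> dist (f y) (f s) < \<eta>"
    unfolding eventually_at_right_field by blast
  then show ?thesis using assms(3)
    by (intro exI[of _ b]) (auto simp: dist_real_def le_less)
qed

lemma cadlag_right_ev:
  assumes "cadlag_on T f" "s \<in> {0..<T}" "\<eta> > 0"
  shows "eventually (\<lambda>u. \<bar>f u - f s\<bar> < \<eta>) (at_right s)"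
proof -
  have "(f \<longlongrightarrow> f s) (at_right s)" using assms unfolding cadlag_on_def by auto
  then have "eventually (\<lambda>u. dist (f u) (f s) < \<eta>) (at_right s)" using assms(3) by (rule tendstoD)
  then show ?thesis by (simp add: dist_real_def)
qed

lemma cadlag_left_ev:
  assumes "cadlag_on T f" "s \<in> {0<..T}" "\<eta> > 0"
  shows "\<exists>l. eventually (\<lambda>u. \<bar>f u - l\<bar> < \<eta>) (at_left s)"
proof -
  have "\<exists>l. (f \<longlongrightarrow> l) (at_left s)" using assms unfolding cadlag_on_def by blast
  then obtain l where "(f \<longlongrightarrow> l) (at_left s)" by blast
  then have "eventually (\<lambda>u. dist (f u) l < \<eta>) (at_left s)" using assms(3) by (rule tendstoD)
  then show ?thesis by (auto simp: dist_real_def)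
qed

lemma cadlag_left:
  assumes "cadlag_on T f" "s \<in> {0<..T}" "\<eta> > 0"
  shows "\<exists>b<s. \<forall>u w. b < u \<and> u < s \<and> b < w \<and> w < s \<longrightarrow> \<bar>f u - f w\<bar> \<le> \<eta>"
proof -
  obtain l where "eventually (\<lambda>u. \<bar>f u - l\<bar> < \<eta>/2) (at_left s)"
    using cadlag_left_ev[OF assms(1,2), of "\<eta>/2"] assms(3) by auto
  then obtain b where b: "b < s" "\<forall>y>b. y < s \<longrightarrow> \<bar>f y - l\<bar> < \<eta>/2"
    unfolding eventually_at_left_field by blast
  have "\<bar>f u - f w\<bar> \<le> \<eta>" if "b < u \<and> u < s \<and> b < w \<and> w < s" for u w
  proof -
    have "\<bar>f u - l\<bar> < \<eta>/2" "\<bar>f w - l\<bar> < \<eta>/2" using b(2) that by auto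
    then show ?thesis by linarith
  qed
  then show ?thesis using b(1) by blast
qed

lemma cadlag_bounded:
  assumes "cadlag_on T f"
  shows "\<exists>M. \<forall>s\<in>{0..T}. \<bar>f s\<bar> \<le> M"
proof -
  have "\<exists>A. finite A \<and> (\<forall>s u. 0 \<le> s \<and> s \<le> u \<and> u < T \<and> (\<forall>a\<in>A. \<not> (s < a \<and> a \<le> u)) \<longrightarrow>
            (\<forall>i\<in>(UNIV::unit set). \<bar>(\<lambda>s i. f s) s i - (\<lambda>s i. f s) u i\<bar> \<le> 1))"
  proof (rule partition_lemma)
    fix s \<eta> :: real assume "s \<in> {0..<T}" "\<eta> > 0"
    from cadlag_right[OF assms this] show "\<exists>b>s. \<forall>u. s \<le> u \<and> u < b \<and> u \<le> T \<longrightarrow> (\<forall>i\<in>(UNIV::unit set). \<bar>f u - f s\<bar> \<le> \<eta>)"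
      by (meson less_imp_le)
  next
    fix s \<eta> :: real assume "s \<in> {0<..T}" "\<eta> > 0"
    from cadlag_left[OF assms this] show "\<exists>b<s. \<forall>u w. b < u \<and> u < s \<and> b < w \<and> w < s \<and> 0 \<le> u \<and> 0 \<le> w \<longrightarrow> (\<forall>i\<in>(UNIV::unit set). \<bar>f u - f w\<bar> \<le> \<eta>)"
      by meson
  qed auto
  then obtain A where A: "finite A" "\<forall>s u. 0 \<le> s \<and> s \<le> u \<and> u < T \<and> (\<forall>a\<in>A. \<not> (s < a \<and> a \<le> u)) \<longrightarrow> \<bar>f s - f u\<bar> \<le> 1"
    by auto
  define M where "M = (\<Sum>a\<in>insert 0 A. \<bar>f a\<bar>) + \<bar>f T\<bar> + 1"
  have "\<bar>f s\<bar> \<le> M" if s: "s \<in> {0..T}" for s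
  proof (cases "s = T")
    case True then show ?thesis unfolding M_def by (smt (verit) sum_nonneg abs_ge_zero)
  next
    case False
    define S where "S = {a \<in> insert 0 A. a \<le> s}"
    have finS: "finite S" "S \<noteq> {}" using A(1) s unfolding S_def by auto
    define a0 where "a0 = Max S"
    have a0S: "a0 \<in> S" unfolding a0_def using finS by (rule Max_in)
    have a0ge: "0 \<le> a0" unfolding a0_def using finS s by (intro Max_ge_iff[THEN iffD2]) (auto simp: S_def)
    have "\<forall>a\<in>A. \<not> (a0 < a \<and> a \<le> s)"
    proof (intro ballI notI)
      fix a assume "a \<in> A" "a0 < a \<and> a \<le> s"
      then have "a \<in> S" unfolding S_def by auto
      then have "a \<le> a0" unfolding a0_def using finS by auto
      then show False using \<open>a0 < a \<and> a \<le> s\<close> by auto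
    qed
    then have "\<bar>f a0 - f s\<bar> \<le> 1" using A(2) a0ge a0S s False unfolding S_def by auto
    moreover have "\<bar>f a0\<bar> \<le> (\<Sum>a\<in>insert 0 A. \<bar>f a\<bar>)"
      by (rule member_le_sum[where f="\<lambda>a. \<bar>f a\<bar>"]) (use a0S A(1) in \<open>auto simp: S_def\<close>)
    ultimately show ?thesis unfolding M_def by linarith
  qed
  then show ?thesis by blast
qed


lemma abs_DD_le_sn0:
  assumes "\<phi> \<in> schwartz"
  shows "\<bar>DD j \<phi> x\<bar> \<le> schwartz_seminorm j 0 \<phi>"
  using sn_upper[OF assms, of x 0 j] by simp

lemma schwartz_series:
  fixes ch :: "nat \<Rightarrow> real \<Rightarrow> real"
  assumes S: "\<And>i. ch i \<in> schwartz"
    and summ: "\<And>j k. summable (\<lambda>i. schwartz_seminorm j k (ch i))"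
  shows "(\<lambda>x. \<Sum>i. ch i x) \<in> schwartz"
    and "\<And>j k x. \<bar>x ^ k * DD j (\<lambda>x. \<Sum>i. ch i x) x\<bar> \<le> (\<Sum>i. schwartz_seminorm j k (ch i))"
proof -
  have sumDD: "summable (\<lambda>i. DD j (ch i) x)" for j x
    by (rule summable_comparison_test'[OF summ[of j 0], of 0]) (use abs_DD_le_sn0[OF S] in auto)
  have der: "((\<lambda>x. \<Sum>i. DD j (ch i) x) has_real_derivative (\<Sum>i. DD (Suc j) (ch i) x)) (at x)" for j x
  proof -
    have uc: "uniformly_convergent_on UNIV (\<lambda>n x. \<Sum>i<n. DD (Suc j) (ch i) x)"
      by (rule Weierstrass_m_test'[OF _ summ[of "Suc j" 0]]) (metis abs_DD_le_sn0 S real_norm_def)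
    have d: "\<And>n x. x \<in> UNIV \<Longrightarrow> (DD j (ch n) has_field_derivative DD (Suc j) (ch n) x) (at x within UNIV)"
      using schwartz_deriv[OF S] by auto
    show ?thesis
      using has_field_derivative_series'(2)[of UNIV "\<lambda>i. DD j (ch i)" "\<lambda>i x. DD (Suc j) (ch i) x" 0 x, OF _ d uc _ sumDD]
      by simp
  qed
  have DDs: "DD j (\<lambda>x. \<Sum>i. ch i x) = (\<lambda>x. \<Sum>i. DD j (ch i) x)" for j
  proof (induction j)
    case 0 then show ?case by simp
  next
    case (Suc j)
    have "DD (Suc j) (\<lambda>x. \<Sum>i. ch i x) = deriv (\<lambda>x. \<Sum>i. DD j (ch i) x)" using Suc.IH by simp
    also have "\<dots> = (\<lambda>x. \<Sum>i. DD (Suc j) (ch i) x)"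
      using der by (intro ext DERIV_imp_deriv) 
    finally show ?case .
  qed
  have bnd: "\<bar>x ^ k * DD j (\<lambda>x. \<Sum>i. ch i x) x\<bar> \<le> (\<Sum>i. schwartz_seminorm j k (ch i))" for j k x
  proof -
    have "x ^ k * DD j (\<lambda>x. \<Sum>i. ch i x) x = (\<Sum>i. x ^ k * DD j (ch i) x)"
      unfolding DDs by (rule suminf_mult[symmetric, OF sumDD])
    also have "\<bar>\<dots>\<bar> \<le> (\<Sum>i. schwartz_seminorm j k (ch i))"
      using norm_suminf_le[of "\<lambda>i. x ^ k * DD j (ch i) x" "\<lambda>i. schwartz_seminorm j k (ch i)"]
        sn_upper[OF S] summ by auto
    finally show ?thesis .
  qed
  then show "\<And>j k x. \<bar>x ^ k * DD j (\<lambda>x. \<Sum>i. ch i x) x\<bar> \<le> (\<Sum>i. schwartz_seminorm j k (ch i))" .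
  show "(\<lambda>x. \<Sum>i. ch i x) \<in> schwartz"
    unfolding schwartz_def smooth_fun_def
  proof (intro CollectI conjI allI)
    fix j x
    show "(DD j (\<lambda>x. \<Sum>i. ch i x) has_real_derivative DD (Suc j) (\<lambda>x. \<Sum>i. ch i x) x) (at x)"
      unfolding DDs by (rule der)
  next
    fix j k
    show "\<exists>C. \<forall>x. \<bar>x ^ k * DD j (\<lambda>x. \<Sum>i. ch i x) x\<bar> \<le> C"
      using bnd by blast
  qed
qed

lemma schwartz_zero_if_qn:
  assumes "\<phi> \<in> schwartz" "qn m \<phi> = 0"
  shows "\<phi> = (\<lambda>x. 0 * \<phi> x)"
proof -
  have "schwartz_seminorm 0 0 \<phi> \<le> 0" using sn_le_qn[OF assms(1), of 0 m 0] assms by simp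
  then have "\<bar>\<phi> x\<bar> \<le> 0" for x using sn_upper[OF assms(1), of x 0 0] by simp
  then show ?thesis by auto
qed

lemma DD_zero: "DD j (\<lambda>x. 0::real) = (\<lambda>x. 0)"
proof (induction j)
  case (Suc j)
  have "deriv (\<lambda>x. 0::real) x = 0" for x by (rule DERIV_imp_deriv) (rule DERIV_const)
  moreover have "DD (Suc j) (\<lambda>x. 0::real) = deriv (\<lambda>x. 0)" using Suc.IH by simp
  ultimately show ?case by (simp add: fun_eq_iff)
qed simp

lemma schwartz_zero: "(\<lambda>x. 0::real) \<in> schwartz"
proof -
  have "(DD j (\<lambda>x. 0::real) has_real_derivative DD (Suc j) (\<lambda>x. 0::real) x) (at x)" for j x
    using DD_zero[of j] DD_zero[of "Suc j"] by (metis DERIV_const)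
  moreover have "\<exists>C. \<forall>x. \<bar>x ^ k * DD j (\<lambda>x. 0::real) x\<bar> \<le> C" for j k
    using DD_zero[of j] by (intro exI[of _ 0]) simp
  ultimately show ?thesis unfolding schwartz_def smooth_fun_def by blast
qed

lemma schwartz_sum: fixes ch :: "nat \<Rightarrow> real \<Rightarrow> real" and k :: nat shows "(\<And>i. i < k \<Longrightarrow> ch i \<in> schwartz) \<Longrightarrow> (\<lambda>x. \<Sum>i<k. ch i x) \<in> schwartz"
proof (induction k)
  case 0
  then show ?case using schwartz_zero by simp
next
  case (Suc k)
  then show ?case using schwartz_add[of "\<lambda>x. \<Sum>i<k. ch i x" "ch k"] by simp
qed


lemma abs_le_sn00: "\<phi> \<in> schwartz \<Longrightarrow> \<bar>\<phi> x\<bar> \<le> schwartz_seminorm 0 0 \<phi>"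
  using sn_upper[of \<phi> x 0 0] by simp

lemma uniform_bound:
  fixes F :: "'s \<Rightarrow> (real \<Rightarrow> real) \<Rightarrow> real" and J :: "'s set"
  assumes temp: "\<And>s. s \<in> J \<Longrightarrow> tempered (F s)"
    and pb: "\<And>\<phi>. \<phi> \<in> schwartz \<Longrightarrow> \<exists>M. \<forall>s\<in>J. \<bar>F s \<phi>\<bar> \<le> M"
  shows "\<exists>C n. \<forall>s\<in>J. \<forall>\<phi>\<in>schwartz. \<bar>F s \<phi>\<bar> \<le> C * qn n \<phi>"
proof (rule ccontr)
  assume nUB: "\<not> ?thesis"
  have "\<forall>s\<in>J. \<exists>p::real \<times> nat. fst p \<ge> 0 \<and> (\<forall>\<phi>\<in>schwartz. \<bar>F s \<phi>\<bar> \<le> fst p * qn (snd p) \<phi>)"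
  proof
    fix s assume "s \<in> J"
    from tempered_bound[OF temp[OF this]] obtain C n where
      "C \<ge> 0" "\<And>\<phi>. \<phi> \<in> schwartz \<Longrightarrow> \<bar>F s \<phi>\<bar> \<le> C * qn n \<phi>" by metis
    then show "\<exists>p::real \<times> nat. fst p \<ge> 0 \<and> (\<forall>\<phi>\<in>schwartz. \<bar>F s \<phi>\<bar> \<le> fst p * qn (snd p) \<phi>)"
      by (intro exI[of _ "(C, n)"]) auto
  qed
  then obtain cn where cn: "\<forall>s\<in>J. fst (cn s) \<ge> 0 \<and> (\<forall>\<phi>\<in>schwartz. \<bar>F s \<phi>\<bar> \<le> fst (cn s) * qn (snd (cn s)) \<phi>)"
    by (rule bchoice[elim_format]) blast
  define Cf where "Cf s = fst (cn s)" for s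
  define nf where "nf s = snd (cn s)" for s
  have Cf: "\<And>s. s \<in> J \<Longrightarrow> Cf s \<ge> 0" "\<And>s \<phi>. s \<in> J \<Longrightarrow> \<phi> \<in> schwartz \<Longrightarrow> \<bar>F s \<phi>\<bar> \<le> Cf s * qn (nf s) \<phi>"
    using cn unfolding Cf_def nf_def by auto
  have "\<forall>\<phi>\<in>schwartz. \<exists>M. \<forall>s\<in>J. \<bar>F s \<phi>\<bar> \<le> M" using pb by blast
  then obtain Mb where Mb: "\<And>\<phi> s. \<phi> \<in> schwartz \<Longrightarrow> s \<in> J \<Longrightarrow> \<bar>F s \<phi>\<bar> \<le> Mb \<phi>"
    by (rule bchoice[elim_format]) blast
  have EX: "\<exists>p. fst p \<in> J \<and> snd p \<in> schwartz \<and> qn m (snd p) \<le> e \<and> L \<le> \<bar>F (fst p) (snd p)\<bar>"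
    if e: "e > 0" for m e L
  proof -
    from nUB have "\<not> (\<forall>s\<in>J. \<forall>\<phi>\<in>schwartz. \<bar>F s \<phi>\<bar> \<le> (\<bar>L\<bar> / e) * qn m \<phi>)" by blast
    then obtain s \<phi> where s: "s \<in> J" "\<phi> \<in> schwartz" "\<bar>F s \<phi>\<bar> > (\<bar>L\<bar> / e) * qn m \<phi>"
      by (auto simp: not_le)
    have q0: "qn m \<phi> \<noteq> 0"
    proof
      assume q: "qn m \<phi> = 0"
      have "F s \<phi> = F s (\<lambda>x. 0 * \<phi> x)" using arg_cong[OF schwartz_zero_if_qn[OF s(2) q], of "F s"] .
      also have "\<dots> = 0" using tempered_scale[OF temp[OF s(1)] s(2), of 0] by simp
      finally show False using s(3) q by simp
    qed
    define q where "q = qn m \<phi>"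
    have qpos: "q > 0" using q0 qn_nonneg[OF s(2), of m] unfolding q_def by linarith
    define c where "c = e / q"
    have cpos: "c > 0" unfolding c_def using qpos e by simp
    define ch where "ch = (\<lambda>x. c * \<phi> x)"
    have "ch \<in> schwartz" unfolding ch_def by (rule schwartz_scale[OF s(2)])
    moreover have "qn m ch \<le> e"
      using qn_scale_le[OF s(2), of m c] cpos qpos e unfolding ch_def c_def q_def by simp
    moreover have "L \<le> \<bar>F s ch\<bar>"
    proof -
      have "\<bar>F s ch\<bar> = c * \<bar>F s \<phi>\<bar>"
        unfolding ch_def using tempered_scale[OF temp[OF s(1)] s(2), of c] cpos by (simp add: abs_mult)
      also have "\<dots> \<ge> c * ((\<bar>L\<bar> / e) * q)"
        by (rule mult_left_mono) (use s(3) cpos in \<open>auto simp: q_def\<close>)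
      also have "c * ((\<bar>L\<bar> / e) * q) = \<bar>L\<bar>" unfolding c_def using qpos e by simp
      finally show ?thesis by simp
    qed
    ultimately show ?thesis using s(1) by (intro exI[of _ "(s, ch)"]) auto
  qed
  define pick where "pick m e L = (SOME p. fst p \<in> J \<and> snd p \<in> schwartz \<and> qn m (snd p) \<le> e \<and> L \<le> \<bar>F (fst p) (snd p)\<bar>)"
    for m e L
  have pick: "fst (pick m e L) \<in> J \<and> snd (pick m e L) \<in> schwartz \<and> qn m (snd (pick m e L)) \<le> e \<and> L \<le> \<bar>F (fst (pick m e L)) (snd (pick m e L))\<bar>"
    if "e > 0" for m e L
    unfolding pick_def by (rule someI_ex[OF EX[OF that]])
  define ee where "ee k N Sc = (1/2)^k / ((1 + Sc) * (1 + real N)^2)" for k :: nat and N :: nat and Sc :: real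
  define stp where "stp k st = (let P = fst st; N = fst (snd st); Sc = snd (snd st);
      p = pick (max N k) (ee k N Sc) (real k + 2 + Mb P) in ((\<lambda>x. P x + snd p x), max N (nf (fst p)), Sc + Cf (fst p)))"
    for k and st :: "(real \<Rightarrow> real) \<times> nat \<times> real"
  define st where "st = rec_nat ((\<lambda>x. 0::real), 0::nat, 0::real) stp"
  define Pk where "Pk k = fst (st k)" for k
  define Nk where "Nk k = fst (snd (st k))" for k
  define Sk where "Sk k = snd (snd (st k))" for k
  define pk where "pk k = pick (max (Nk k) k) (ee k (Nk k) (Sk k)) (real k + 2 + Mb (Pk k))" for k
  define sc where "sc k = fst (pk k)" for k
  define ch where "ch k = snd (pk k)" for k
  have st0: "Pk 0 = (\<lambda>x. 0)" "Nk 0 = 0" "Sk 0 = 0"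
    unfolding Pk_def Nk_def Sk_def st_def by simp_all
  have stS: "Pk (Suc k) = (\<lambda>x. Pk k x + ch k x)" "Nk (Suc k) = max (Nk k) (nf (sc k))" "Sk (Suc k) = Sk k + Cf (sc k)" for k
    unfolding Pk_def Nk_def Sk_def ch_def sc_def pk_def by (simp_all add: st_def stp_def Let_def)
  have ee_pos: "Sc \<ge> 0 \<Longrightarrow> ee k N Sc > 0" for k N Sc unfolding ee_def by (intro divide_pos_pos mult_pos_pos) auto
  have inv: "Sk k \<ge> 0 \<and> Pk k = (\<lambda>x. \<Sum>i<k. ch i x)" for k
  proof (induction k)
    case 0 then show ?case using st0 by simp
  next
    case (Suc k)
    have "sc k \<in> J" using pick[OF ee_pos[of "Sk k"]] Suc unfolding sc_def pk_def by simp
    then show ?case using Suc Cf(1) stS[of k] by simp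
  qed
  have pk_ok: "sc k \<in> J \<and> ch k \<in> schwartz \<and> qn (max (Nk k) k) (ch k) \<le> ee k (Nk k) (Sk k) \<and> real k + 2 + Mb (Pk k) \<le> \<bar>F (sc k) (ch k)\<bar>" for k
    using pick[OF ee_pos[of "Sk k"]] inv[of k] unfolding sc_def ch_def pk_def by simp
  have Pk_S: "Pk k \<in> schwartz" for k
    using inv[of k] schwartz_sum[of k ch] pk_ok by simp
  have mono: "i < k \<Longrightarrow> nf (sc i) \<le> Nk k \<and> Cf (sc i) \<le> Sk k" for i k
  proof (induction k)
    case 0 then show ?case by simp
  next
    case (Suc k)
    have c0: "Cf (sc k) \<ge> 0" using Cf(1) pk_ok by blast
    show ?case
    proof (cases "i < k")
      case True then show ?thesis using Suc c0 stS[of k] by auto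
    next
      case False then have "i = k" using Suc by simp
      then show ?thesis using stS[of k] inv[of k] by auto
    qed
  qed
  have sn_ee: "schwartz_seminorm j k (ch i) \<le> ee i (Nk i) (Sk i)" if "j \<le> max (Nk i) i" "k \<le> max (Nk i) i" for j k i
    using sn_le_qn[of "ch i" j "max (Nk i) i" k] pk_ok[of i] that by linarith
  have ee_le: "ee i N Sc \<le> (1/2)^i" if "Sc \<ge> 0" for i N Sc
  proof -
    have "1 \<le> (1 + Sc) * (1 + real N)^2"
      using that by (metis le_add_same_cancel1 mult_mono' one_le_power of_nat_0_le_iff mult_1_left zero_le_one)
    then have "(1/2::real)^i / ((1 + Sc) * (1 + real N)^2) \<le> (1/2)^i / 1"
      by (intro divide_left_mono) auto
    then show ?thesis unfolding ee_def by simp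
  qed
  have geo: "summable (\<lambda>i. (1/2::real)^i)" by (rule summable_geometric) simp
  have summ: "summable (\<lambda>i. schwartz_seminorm j k (ch i))" for j k
  proof (rule summable_comparison_test'[OF geo, of "max j k"])
    fix i assume "max j k \<le> i"
    then have "schwartz_seminorm j k (ch i) \<le> (1/2)^i"
      using sn_ee[of j i k] ee_le[of "Sk i" i "Nk i"] inv[of i] by force
    then show "norm (schwartz_seminorm j k (ch i)) \<le> (1/2)^i"
      using sn_nonneg[of "ch i" j k] pk_ok by auto
  qed
  define \<Phi> where "\<Phi> = (\<lambda>x. \<Sum>i. ch i x)"
  have \<Phi>S: "\<Phi> \<in> schwartz" unfolding \<Phi>_def by (rule schwartz_series(1)) (use pk_ok summ in auto)
  have big: "real k + 1 \<le> \<bar>F (sc k) \<Phi>\<bar>" for k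
  proof -
    define R where "R = (\<lambda>x. \<Sum>i. ch (i + Suc k) x)"
    have summR: "summable (\<lambda>i. schwartz_seminorm j k' (ch (i + Suc k)))" for j k'
      using summable_ignore_initial_segment[OF summ[of j k'], of "Suc k"] .
    have RS: "R \<in> schwartz" unfolding R_def by (rule schwartz_series(1)) (use pk_ok summR in auto)
    have Rb: "\<bar>x ^ k' * DD j R x\<bar> \<le> (\<Sum>i. schwartz_seminorm j k' (ch (i + Suc k)))" for j k' x
      unfolding R_def by (rule schwartz_series(2)) (use pk_ok summR in auto)
    have sumch: "summable (\<lambda>i. ch i x)" for x
      by (rule summable_comparison_test'[OF summ[of 0 0], of 0]) (use abs_le_sn00 pk_ok in \<open>auto\<close>)
    have "\<Phi> x = R x + (\<Sum>i<Suc k. ch i x)" for x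
      unfolding \<Phi>_def R_def by (rule suminf_split_initial_segment[OF sumch])
    then have \<Phi>eq: "\<Phi> = (\<lambda>x. (\<lambda>x. Pk k x + ch k x) x + R x)"
      using inv[of k] by (auto simp: fun_eq_iff)
    have tk: "tempered (F (sc k))" using temp pk_ok by blast
    have PchS: "(\<lambda>x. Pk k x + ch k x) \<in> schwartz" using schwartz_add Pk_S pk_ok by blast
    have FPhi: "F (sc k) \<Phi> = F (sc k) (Pk k) + F (sc k) (ch k) + F (sc k) R"
      unfolding \<Phi>eq using tempered_add[OF tk PchS RS] tempered_add[OF tk Pk_S] pk_ok by simp
    define n where "n = nf (sc k)"
    define C where "C = Cf (sc k)"
    have C0: "C \<ge> 0" unfolding C_def using Cf(1) pk_ok by blast
    define K where "K = (1 + C) * (1 + real n)^2"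
    have Kpos: "K > 0" unfolding K_def using C0 by (intro mult_pos_pos) auto
    have trm: "schwartz_seminorm j k' (ch (i + Suc k)) \<le> (1/2)^i / (2 * K)" if "j \<le> n" "k' \<le> n" for j k' i
    proof -
      define i' where "i' = i + Suc k"
      have m: "n \<le> Nk i'" "C \<le> Sk i'" using mono[of k i'] unfolding i'_def n_def C_def by auto
      have "schwartz_seminorm j k' (ch i') \<le> ee i' (Nk i') (Sk i')"
        using sn_ee[of j i' k'] that m by auto
      also have "\<dots> \<le> (1/2)^i' / K"
        unfolding ee_def K_def
        using m C0 by (intro divide_left_mono mult_mono power_mono) auto
      also have "\<dots> \<le> (1/2)^i / (2 * K)"
      proof -
        have "(1/2::real)^i' \<le> (1/2)^(Suc i)" unfolding i'_def by (rule power_decreasing) auto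
        then have "(1/2::real)^i' / K \<le> ((1/2)^i / 2) / K" using Kpos by (intro divide_right_mono) auto
        then show ?thesis by simp
      qed
      finally show ?thesis unfolding i'_def .
    qed
    have geosum: "(\<Sum>i. (1/2::real)^i / (2 * K)) = 1 / K"
      using suminf_divide[OF geo, of "2 * K"] suminf_geometric[of "1/2::real"] by simp
    have Rbound: "\<bar>x ^ k' * DD j R x\<bar> \<le> 1 / K" if "j \<le> n" "k' \<le> n" for j k' x
    proof -
      have "(\<Sum>i. schwartz_seminorm j k' (ch (i + Suc k))) \<le> (\<Sum>i. (1/2::real)^i / (2 * K))"
        by (rule suminf_le) (use trm[OF that] summR summable_divide[OF geo] in auto)
      then show ?thesis using Rb[where j=j and k'=k' and x=x] geosum by linarith
    qed
    have "qn n R \<le> (real n + 1)^2 * (1 / K)" by (rule qn_le) (use Rbound in auto)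
    then have "C * qn n R \<le> C * ((real n + 1)^2 * (1 / K))" using C0 by (rule mult_left_mono)
    also have "\<dots> = C / (1 + C)"
    proof -
      have a: "(real n + 1)^2 > 0" by simp
      have "1 + C > 0" using C0 by simp
      have K': "K = (1 + C) * (real n + 1)^2" unfolding K_def by (simp add: add.commute)
      have "(real n + 1)^2 * (1 / K) = (real n + 1)^2 / ((1 + C) * (real n + 1)^2)" unfolding K' by simp
      also have "\<dots> = 1 / (1 + C)" using a by (intro nonzero_divide_mult_cancel_right) simp
      finally show ?thesis by simp
    qed
    also have "\<dots> \<le> 1" using C0 by simp
    finally have FR: "\<bar>F (sc k) R\<bar> \<le> 1"
      using Cf(2)[of "sc k" R] pk_ok[of k] RS unfolding C_def n_def by linarith
    have FP: "\<bar>F (sc k) (Pk k)\<bar> \<le> Mb (Pk k)" using Mb Pk_S pk_ok by blast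
    show ?thesis using FR FP pk_ok[of k] unfolding FPhi by linarith
  qed
  obtain s0 where "s0 \<in> J" using pk_ok by blast
  define k where "k = nat \<lceil>Mb \<Phi>\<rceil>"
  have "\<bar>F (sc k) \<Phi>\<bar> \<le> Mb \<Phi>" using Mb \<Phi>S pk_ok by blast
  moreover have "Mb \<Phi> < real k + 1" unfolding k_def by linarith
  ultimately show False using big[of k] by linarith
qed


lemma floor_eq_close:
  fixes a b q :: real
  assumes "q > 0" "\<lfloor>a / q\<rfloor> = \<lfloor>b / q\<rfloor>"
  shows "\<bar>a - b\<bar> \<le> q"
proof -
  have "of_int \<lfloor>a / q\<rfloor> \<le> a / q" "a / q < of_int \<lfloor>a / q\<rfloor> + 1"
       "of_int \<lfloor>b / q\<rfloor> \<le> b / q" "b / q < of_int \<lfloor>b / q\<rfloor> + 1"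
    using floor_correct[of "a / q"] floor_correct[of "b / q"] by auto
  then have "\<bar>a / q - b / q\<bar> < 1" using assms(2) by linarith
  moreover have "(a - b) / q = a / q - b / q" by (rule diff_divide_distrib)
  ultimately have "\<bar>a - b\<bar> / q < 1" using assms(1) by (simp add: abs_div_pos)
  then show ?thesis using assms(1) by (simp add: divide_less_eq)
qed

lemma floor_div_bound:
  fixes y q M :: real
  assumes "q > 0" "\<bar>y\<bar> \<le> M"
  shows "\<lfloor>y / q\<rfloor> \<in> {- (\<lceil>M / q\<rceil> + 1) .. \<lceil>M / q\<rceil> + 1}"
proof -
  have y1: "y / q \<le> M / q" "- (M / q) \<le> y / q"
    using divide_right_mono[of y M q] divide_right_mono[of "-M" y q] assms by auto
  have f: "real_of_int \<lfloor>y / q\<rfloor> \<le> y / q" "y / q < real_of_int \<lfloor>y / q\<rfloor> + 1"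
    using floor_correct[of "y / q"] by auto
  have c: "M / q \<le> real_of_int \<lceil>M / q\<rceil>" using ceiling_correct[of "M / q"] by auto
  have "real_of_int \<lfloor>y / q\<rfloor> \<le> real_of_int \<lceil>M / q\<rceil> + 1" using f y1 c by linarith
  then have "real_of_int \<lfloor>y / q\<rfloor> \<le> real_of_int (\<lceil>M / q\<rceil> + 1)" by simp
  moreover have "- real_of_int \<lceil>M / q\<rceil> - 1 \<le> real_of_int \<lfloor>y / q\<rfloor>" using f y1 c by linarith
  then have "real_of_int (- (\<lceil>M / q\<rceil> + 1)) \<le> real_of_int \<lfloor>y / q\<rfloor>" by simp
  ultimately show ?thesis unfolding atLeastAtMost_iff of_int_le_iff by blast
qed

lemma total_bounded:
  assumes Psi: "schwartz_bounded \<Psi>" and eta: "\<eta> > 0"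
  shows "\<exists>F. finite F \<and> F \<subseteq> \<Psi> \<and> (\<forall>\<psi>\<in>\<Psi>. \<exists>\<psi>0\<in>F. \<forall>j\<le>n. \<forall>k\<le>n. \<forall>x. \<bar>x ^ k * (DD j \<psi> x - DD j \<psi>0 x)\<bar> \<le> \<eta>)"
proof -
  have PsiS: "\<Psi> \<subseteq> schwartz" using Psi unfolding schwartz_bounded_def by blast
  have "\<forall>j k. \<exists>C. \<forall>\<phi>\<in>\<Psi>. \<forall>x. \<bar>x ^ k * DD j \<phi> x\<bar> \<le> C" using Psi unfolding schwartz_bounded_def by blast
  then obtain Cb where Cb: "\<And>j k \<phi> x. \<phi> \<in> \<Psi> \<Longrightarrow> \<bar>x ^ k * DD j \<phi> x\<bar> \<le> Cb j k" by metis
  define M where "M = (\<Sum>j\<le>Suc n. \<Sum>k\<le>Suc n. \<bar>Cb j k\<bar>)"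
  have MB: "\<bar>x ^ k * DD j \<phi> x\<bar> \<le> M" if "\<phi> \<in> \<Psi>" "j \<le> Suc n" "k \<le> Suc n" for \<phi> x j k
  proof -
    have "\<bar>Cb j k\<bar> \<le> (\<Sum>k\<le>Suc n. \<bar>Cb j k\<bar>)"
      by (rule member_le_sum[where f="\<lambda>k. \<bar>Cb j k\<bar>"]) (use that in auto)
    also have "\<dots> \<le> M" unfolding M_def
      by (rule member_le_sum[where f="\<lambda>j. \<Sum>k\<le>Suc n. \<bar>Cb j k\<bar>"]) (use that in \<open>auto intro: sum_nonneg\<close>)
    finally show ?thesis using Cb[OF that(1), of x k j] by linarith
  qed
  have M0: "M \<ge> 0" unfolding M_def by (intro sum_nonneg) auto
  define R where "R = 2 * M / \<eta> + 1"
  have Rpos: "R > 0" unfolding R_def using M0 eta by (smt (verit) divide_nonneg_pos)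
  have RM: "2 * M \<le> R * \<eta>" unfolding R_def using eta by (simp add: field_simps)
  define Lp where "Lp = (real n + 2) * M"
  have Lp0: "Lp \<ge> 0" unfolding Lp_def using M0 by simp
  define hs where "hs = \<eta> / (4 * (Lp + 1))"
  have hs0: "hs > 0" unfolding hs_def using eta Lp0 by simp
  have hsLp: "2 * Lp * hs \<le> \<eta> / 2"
  proof -
    have d: "4 * (Lp + 1) > 0" using Lp0 by simp
    have e: "hs * (4 * (Lp + 1)) = \<eta>" unfolding hs_def using d by simp
    then have "4 * (hs * Lp) + 4 * hs = \<eta>" by (simp add: algebra_simps)
    moreover have "2 * Lp * hs = 2 * (hs * Lp)" by simp
    ultimately show ?thesis using hs0 by linarith
  qed
  define L where "L = nat \<lceil>2 * R / hs\<rceil>"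
  define xg where "xg l = - R + real l * hs" for l :: nat
  define qv where "qv = \<eta> / 4"
  have qv0: "qv > 0" unfolding qv_def using eta by simp
  define idx where "idx = List.product [0..<Suc n] (List.product [0..<Suc n] [0..<Suc L])"
  define code where "code \<phi> = map (\<lambda>(j, k, l). \<lfloor>(xg l ^ k * DD j \<phi> (xg l)) / qv\<rfloor>) idx" for \<phi>
  define N where "N = \<lceil>M / qv\<rceil> + 1"
  have "code ` \<Psi> \<subseteq> {xs. set xs \<subseteq> {-N..N} \<and> length xs = length idx}"
  proof safe
    fix \<phi> z assume "\<phi> \<in> \<Psi>" "z \<in> set (code \<phi>)"
    then obtain j k l where jkl: "(j, k, l) \<in> set idx" "z = \<lfloor>(xg l ^ k * DD j \<phi> (xg l)) / qv\<rfloor>"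
      unfolding code_def by auto
    have "j \<le> Suc n" "k \<le> Suc n" using jkl(1) unfolding idx_def by auto
    then show "z \<in> {-N..N}" unfolding jkl(2) N_def
      using floor_div_bound[OF qv0 MB[OF \<open>\<phi> \<in> \<Psi>\<close>]] by blast
  qed (simp add: code_def)
  then have fincode: "finite (code ` \<Psi>)"
    by (rule finite_subset) (rule finite_lists_length_eq, simp)
  define rep where "rep c = (SOME \<phi>. \<phi> \<in> \<Psi> \<and> code \<phi> = c)" for c
  define F where "F = rep ` (code ` \<Psi>)"
  have rep: "rep (code \<psi>) \<in> \<Psi> \<and> code (rep (code \<psi>)) = code \<psi>" if "\<psi> \<in> \<Psi>" for \<psi>
    unfolding rep_def using someI[of "\<lambda>\<phi>. \<phi> \<in> \<Psi> \<and> code \<phi> = code \<psi>" \<psi>] that by blast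
  have "finite F" unfolding F_def using fincode by simp
  moreover have "F \<subseteq> \<Psi>" unfolding F_def using rep by auto
  moreover have "\<exists>\<psi>0\<in>F. \<forall>j\<le>n. \<forall>k\<le>n. \<forall>x. \<bar>x ^ k * (DD j \<psi> x - DD j \<psi>0 x)\<bar> \<le> \<eta>" if \<psi>: "\<psi> \<in> \<Psi>" for \<psi>
  proof (intro bexI allI impI)
    define \<psi>0 where "\<psi>0 = rep (code \<psi>)"
    show "\<psi>0 \<in> F" unfolding \<psi>0_def F_def using \<psi> by simp
    have \<psi>0: "\<psi>0 \<in> \<Psi>" "code \<psi>0 = code \<psi>" using rep[OF \<psi>] unfolding \<psi>0_def by auto
    fix j k x assume jk: "j \<le> n" "k \<le> n"
    define h where "h \<phi> y = y ^ k * DD j \<phi> y" for \<phi> y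
    have lip: "\<bar>h \<phi> y - h \<phi> z\<bar> \<le> Lp * \<bar>y - z\<bar>" if "\<phi> \<in> \<Psi>" for \<phi> y z
    proof (rule real_lipschitz)
      have \<phi>S: "\<phi> \<in> schwartz" using that PsiS by auto
      show "(h \<phi> has_real_derivative (real k * y ^ (k - 1) * DD j \<phi> y + y ^ k * DD (Suc j) \<phi> y)) (at y)" for y
        unfolding h_def by (auto intro!: derivative_eq_intros schwartz_deriv[OF \<phi>S])
      show "\<bar>real k * y ^ (k - 1) * DD j \<phi> y + y ^ k * DD (Suc j) \<phi> y\<bar> \<le> Lp" for y
      proof -
        have a: "\<bar>real k * y ^ (k - 1) * DD j \<phi> y\<bar> \<le> real k * M"
        proof -
          have "\<bar>y ^ (k - 1) * DD j \<phi> y\<bar> \<le> M" using MB[OF that, of j "k - 1" y] jk by simp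
          then show ?thesis by (simp add: abs_mult mult_left_mono mult.assoc)
        qed
        have b: "\<bar>y ^ k * DD (Suc j) \<phi> y\<bar> \<le> M" using MB[OF that, of "Suc j" k y] jk by simp
        have "real k * M \<le> real n * M" using jk M0 by (intro mult_right_mono) auto
        then have "real k * M + M \<le> Lp" unfolding Lp_def using M0 by (simp add: algebra_simps)
        then show ?thesis using a b by (smt (verit) abs_triangle_ineq)
      qed
    qed
    have "\<bar>h \<psi> x - h \<psi>0 x\<bar> \<le> \<eta>"
    proof (cases "\<bar>x\<bar> \<ge> R")
      case True
      have tail: "\<bar>h \<phi> x\<bar> \<le> M / R" if "\<phi> \<in> \<Psi>" for \<phi>
      proof -
        have "\<bar>x\<bar> * \<bar>h \<phi> x\<bar> \<le> M" using MB[OF that, of j "Suc k" x] jk unfolding h_def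
          by (simp add: abs_mult mult.assoc)
        moreover have "R * \<bar>h \<phi> x\<bar> \<le> \<bar>x\<bar> * \<bar>h \<phi> x\<bar>" using True by (simp add: mult_right_mono)
        ultimately have "R * \<bar>h \<phi> x\<bar> \<le> M" by linarith
        then show ?thesis using Rpos by (simp add: field_simps)
      qed
      have "\<bar>h \<psi> x - h \<psi>0 x\<bar> \<le> M / R + M / R" using tail[OF \<psi>] tail[OF \<psi>0(1)] by linarith
      also have "\<dots> \<le> \<eta>" using RM Rpos by (simp add: field_simps)
      finally show ?thesis .
    next
      case False
      define l where "l = nat \<lfloor>(x + R) / hs\<rfloor>"
      have xl: "xg l \<le> x" "x < xg l + hs"
      proof -
        have "0 \<le> (x + R) / hs" using False hs0 by simp
        then have fl: "real l = real_of_int \<lfloor>(x + R) / hs\<rfloor>" unfolding l_def by simp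
        have "real_of_int \<lfloor>(x + R) / hs\<rfloor> \<le> (x + R) / hs" "(x + R) / hs < real_of_int \<lfloor>(x + R) / hs\<rfloor> + 1"
          by linarith+
        then have "real_of_int \<lfloor>(x + R) / hs\<rfloor> * hs \<le> x + R" "x + R < (real_of_int \<lfloor>(x + R) / hs\<rfloor> + 1) * hs"
          using hs0 by (simp_all only: pos_le_divide_eq pos_divide_less_eq)
        then have "real l * hs \<le> x + R" "x + R < (real l + 1) * hs"
          using fl by simp_all
        then show "xg l \<le> x" "x < xg l + hs" unfolding xg_def by (simp_all add: algebra_simps)
      qed
      have lL: "l < Suc L"
      proof -
        have "(x + R) / hs \<le> 2 * R / hs" using False hs0 by (intro divide_right_mono) auto
        then have "\<lfloor>(x + R) / hs\<rfloor> \<le> \<lceil>2 * R / hs\<rceil>" by linarith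
        then show ?thesis unfolding l_def L_def by linarith
      qed
      have "(j, k, l) \<in> set idx" unfolding idx_def using jk lL by auto
      then have "\<lfloor>h \<psi> (xg l) / qv\<rfloor> = \<lfloor>h \<psi>0 (xg l) / qv\<rfloor>"
        using \<psi>0(2) unfolding code_def h_def map_eq_conv by fastforce
      then have g: "\<bar>h \<psi> (xg l) - h \<psi>0 (xg l)\<bar> \<le> qv" by (intro floor_eq_close qv0) simp
      have d: "\<bar>x - xg l\<bar> \<le> hs" using xl by simp
      have "\<bar>h \<psi> x - h \<psi> (xg l)\<bar> \<le> Lp * hs" using lip[OF \<psi>, of x "xg l"] d Lp0 by (smt (verit) mult_left_mono)
      moreover have "\<bar>h \<psi>0 x - h \<psi>0 (xg l)\<bar> \<le> Lp * hs" using lip[OF \<psi>0(1), of x "xg l"] d Lp0 by (smt (verit) mult_left_mono)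
      ultimately have "\<bar>h \<psi> x - h \<psi>0 x\<bar> \<le> 2 * Lp * hs + qv" using g by linarith
      also have "\<dots> \<le> \<eta>" using hsLp eta unfolding qv_def by linarith
      finally show ?thesis .
    qed
    then show "\<bar>x ^ k * (DD j \<psi> x - DD j \<psi>0 x)\<bar> \<le> \<eta>" unfolding h_def by (simp add: algebra_simps)
  qed
  ultimately show ?thesis by blast
qed


lemma dpaths_tempered: "X \<in> Dpaths T \<Longrightarrow> s \<in> {0..T} \<Longrightarrow> tempered (X s)"
  unfolding Dpaths_def by blast

lemma dpaths_cadlag: "X \<in> Dpaths T \<Longrightarrow> \<phi> \<in> schwartz \<Longrightarrow> cadlag_on T (\<lambda>t. X t \<phi>)"
  unfolding Dpaths_def by blast

lemma dpaths_ub: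
  assumes X: "X \<in> Dpaths T"
  shows "\<exists>C n. C \<ge> 0 \<and> (\<forall>s\<in>{0..T}. \<forall>\<phi>\<in>schwartz. \<bar>X s \<phi>\<bar> \<le> C * qn n \<phi>)"
proof -
  have "\<exists>C n. \<forall>s\<in>{0..T}. \<forall>\<phi>\<in>schwartz. \<bar>X s \<phi>\<bar> \<le> C * qn n \<phi>"
  proof (rule uniform_bound)
    show "\<And>s. s \<in> {0..T} \<Longrightarrow> tempered (X s)" using dpaths_tempered[OF X] .
    show "\<And>\<phi>. \<phi> \<in> schwartz \<Longrightarrow> \<exists>M. \<forall>s\<in>{0..T}. \<bar>X s \<phi>\<bar> \<le> M"
      using cadlag_bounded[OF dpaths_cadlag[OF X]] by blast
  qed
  then obtain C n where h: "\<forall>s\<in>{0..T}. \<forall>\<phi>\<in>schwartz. \<bar>X s \<phi>\<bar> \<le> C * qn n \<phi>" by blast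
  have "\<forall>s\<in>{0..T}. \<forall>\<phi>\<in>schwartz. \<bar>X s \<phi>\<bar> \<le> max C 0 * qn n \<phi>"
  proof (intro ballI)
    fix s \<phi> assume "s \<in> {0..T}" "\<phi> \<in> schwartz"
    then have "\<bar>X s \<phi>\<bar> \<le> C * qn n \<phi>" "0 \<le> qn n \<phi>" using h qn_nonneg by auto
    then show "\<bar>X s \<phi>\<bar> \<le> max C 0 * qn n \<phi>" by (smt (verit) mult_right_mono max.cobounded1)
  qed
  then show ?thesis by (intro exI[of _ "max C 0"] exI[of _ n]) auto
qed

lemma net_qn:
  assumes "\<psi> \<in> schwartz" "\<psi>0 \<in> schwartz"
    and "\<forall>j\<le>n. \<forall>k\<le>n. \<forall>x. \<bar>x ^ k * (DD j \<psi> x - DD j \<psi>0 x)\<bar> \<le> \<eta>"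
  shows "qn n (\<lambda>x. \<psi> x - \<psi>0 x) \<le> (real n + 1)^2 * \<eta>"
  by (rule qn_le) (use assms in \<open>simp add: DD_diff\<close>)

lemma bounded_qn:
  assumes "schwartz_bounded \<Psi>"
  shows "\<exists>Q. \<forall>\<psi>\<in>\<Psi>. qn n \<psi> \<le> Q"
proof -
  have "\<forall>j k. \<exists>C. \<forall>\<phi>\<in>\<Psi>. \<forall>x. \<bar>x ^ k * DD j \<phi> x\<bar> \<le> C" using assms unfolding schwartz_bounded_def by blast
  then obtain Cb where Cb: "\<And>j k \<phi> x. \<phi> \<in> \<Psi> \<Longrightarrow> \<bar>x ^ k * DD j \<phi> x\<bar> \<le> Cb j k" by metis
  define M where "M = (\<Sum>j\<le>n. \<Sum>k\<le>n. \<bar>Cb j k\<bar>)"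
  have MB: "\<bar>x ^ k * DD j \<phi> x\<bar> \<le> M" if "\<phi> \<in> \<Psi>" "j \<le> n" "k \<le> n" for \<phi> x j k
  proof -
    have "\<bar>Cb j k\<bar> \<le> (\<Sum>k\<le>n. \<bar>Cb j k\<bar>)"
      by (rule member_le_sum[where f="\<lambda>k. \<bar>Cb j k\<bar>"]) (use that in auto)
    also have "\<dots> \<le> M" unfolding M_def
      by (rule member_le_sum[where f="\<lambda>j. \<Sum>k\<le>n. \<bar>Cb j k\<bar>"]) (use that in \<open>auto intro: sum_nonneg\<close>)
    finally show ?thesis using Cb[OF that(1), of x k j] by linarith
  qed
  have "qn n \<psi> \<le> (real n + 1)^2 * M" if "\<psi> \<in> \<Psi>" for \<psi>
    by (rule qn_le) (use MB that in auto)
  then show ?thesis by blast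
qed

lemma strong_approx:
  assumes X: "X \<in> Dpaths T" and C: "C \<ge> 0" "\<And>s \<phi>. s \<in> {0..T} \<Longrightarrow> \<phi> \<in> schwartz \<Longrightarrow> \<bar>X s \<phi>\<bar> \<le> C * qn n \<phi>"
    and Psi: "schwartz_bounded \<Psi>" and eta: "\<eta> > 0"
  shows "\<exists>F. finite F \<and> F \<subseteq> \<Psi> \<and> (\<forall>\<psi>\<in>\<Psi>. \<exists>\<psi>0\<in>F. \<forall>s\<in>{0..T}. \<bar>X s \<psi> - X s \<psi>0\<bar> \<le> \<eta>)"
proof -
  have PsiS: "\<Psi> \<subseteq> schwartz" using Psi unfolding schwartz_bounded_def by blast
  define \<eta>' where "\<eta>' = \<eta> / ((C + 1) * (real n + 1)^2)"
  have \<eta>'0: "\<eta>' > 0" unfolding \<eta>'_def using eta C(1) by (intro divide_pos_pos mult_pos_pos) auto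
  obtain F where F: "finite F" "F \<subseteq> \<Psi>" "\<forall>\<psi>\<in>\<Psi>. \<exists>\<psi>0\<in>F. \<forall>j\<le>n. \<forall>k\<le>n. \<forall>x. \<bar>x ^ k * (DD j \<psi> x - DD j \<psi>0 x)\<bar> \<le> \<eta>'"
    using total_bounded[OF Psi \<eta>'0, of n] by blast
  have "\<exists>\<psi>0\<in>F. \<forall>s\<in>{0..T}. \<bar>X s \<psi> - X s \<psi>0\<bar> \<le> \<eta>" if \<psi>: "\<psi> \<in> \<Psi>" for \<psi>
  proof -
    obtain \<psi>0 where \<psi>0: "\<psi>0 \<in> F" "\<forall>j\<le>n. \<forall>k\<le>n. \<forall>x. \<bar>x ^ k * (DD j \<psi> x - DD j \<psi>0 x)\<bar> \<le> \<eta>'"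
      using F(3) \<psi> by blast
    have S: "\<psi> \<in> schwartz" "\<psi>0 \<in> schwartz" using \<psi> \<psi>0(1) F(2) PsiS by auto
    have q: "qn n (\<lambda>x. \<psi> x - \<psi>0 x) \<le> (real n + 1)^2 * \<eta>'" by (rule net_qn[OF S \<psi>0(2)])
    have "\<bar>X s \<psi> - X s \<psi>0\<bar> \<le> \<eta>" if s: "s \<in> {0..T}" for s
    proof -
      have "\<bar>X s \<psi> - X s \<psi>0\<bar> = \<bar>X s (\<lambda>x. \<psi> x - \<psi>0 x)\<bar>"
        using tempered_diff[OF dpaths_tempered[OF X s] S] by simp
      also have "\<dots> \<le> C * qn n (\<lambda>x. \<psi> x - \<psi>0 x)" by (rule C(2)[OF s schwartz_diff[OF S]])
      also have "\<dots> \<le> C * ((real n + 1)^2 * \<eta>')" using q C(1) by (rule mult_left_mono)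
      also have "\<dots> \<le> (C + 1) * ((real n + 1)^2 * \<eta>')" using \<eta>'0 by (intro mult_right_mono) auto
      also have "\<dots> = ((C + 1) * (real n + 1)^2) * \<eta>'" by (simp only: mult.assoc)
      also have "\<dots> = \<eta>"
      proof -
        have d: "(C + 1) * (real n + 1)^2 \<noteq> 0" using C(1) by simp
        then show ?thesis unfolding \<eta>'_def by simp
      qed
      finally show ?thesis .
    qed
    then show ?thesis using \<psi>0(1) by blast
  qed
  then show ?thesis using F(1,2) by blast
qed

lemma strong_RC:
  assumes X: "X \<in> Dpaths T" and C: "C \<ge> 0" "\<And>s \<phi>. s \<in> {0..T} \<Longrightarrow> \<phi> \<in> schwartz \<Longrightarrow> \<bar>X s \<phi>\<bar> \<le> C * qn n \<phi>"
    and Psi: "schwartz_bounded \<Psi>" and s: "s \<in> {0..<T}" and eta: "\<eta> > 0"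
  shows "\<exists>b>s. \<forall>u. s \<le> u \<and> u < b \<and> u \<le> T \<longrightarrow> (\<forall>\<psi>\<in>\<Psi>. \<bar>X u \<psi> - X s \<psi>\<bar> \<le> \<eta>)"
proof -
  have PsiS: "\<Psi> \<subseteq> schwartz" using Psi unfolding schwartz_bounded_def by blast
  obtain F where F: "finite F" "F \<subseteq> \<Psi>" "\<forall>\<psi>\<in>\<Psi>. \<exists>\<psi>0\<in>F. \<forall>t\<in>{0..T}. \<bar>X t \<psi> - X t \<psi>0\<bar> \<le> \<eta>/3"
    using strong_approx[OF X C Psi, of "\<eta>/3"] eta by auto
  have "\<forall>\<psi>0\<in>F. eventually (\<lambda>u. \<bar>X u \<psi>0 - X s \<psi>0\<bar> < \<eta>/3) (at_right s)"
    using cadlag_right_ev[OF dpaths_cadlag[OF X] s, of _ "\<eta>/3"] F(2) PsiS eta by auto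
  then have "eventually (\<lambda>u. \<forall>\<psi>0\<in>F. \<bar>X u \<psi>0 - X s \<psi>0\<bar> < \<eta>/3) (at_right s)"
    by (rule eventually_ball_finite[OF F(1)])
  then obtain b where b: "b > s" "\<forall>y>s. y < b \<longrightarrow> (\<forall>\<psi>0\<in>F. \<bar>X y \<psi>0 - X s \<psi>0\<bar> < \<eta>/3)"
    unfolding eventually_at_right_field by blast
  have "\<bar>X u \<psi> - X s \<psi>\<bar> \<le> \<eta>" if u: "s \<le> u" "u < b" "u \<le> T" and \<psi>: "\<psi> \<in> \<Psi>" for u \<psi>
  proof (cases "u = s")
    case True then show ?thesis using eta by simp
  next
    case False
    obtain \<psi>0 where \<psi>0: "\<psi>0 \<in> F" "\<forall>t\<in>{0..T}. \<bar>X t \<psi> - X t \<psi>0\<bar> \<le> \<eta>/3" using F(3) \<psi> by blast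
    have "\<bar>X u \<psi>0 - X s \<psi>0\<bar> < \<eta>/3" using b(2) u False \<psi>0(1) by auto
    moreover have "\<bar>X u \<psi> - X u \<psi>0\<bar> \<le> \<eta>/3" "\<bar>X s \<psi> - X s \<psi>0\<bar> \<le> \<eta>/3"
      using \<psi>0(2) u s by auto
    ultimately show ?thesis by linarith
  qed
  then show ?thesis using b(1) by blast
qed

lemma strong_LC:
  assumes X: "X \<in> Dpaths T" and C: "C \<ge> 0" "\<And>s \<phi>. s \<in> {0..T} \<Longrightarrow> \<phi> \<in> schwartz \<Longrightarrow> \<bar>X s \<phi>\<bar> \<le> C * qn n \<phi>"
    and Psi: "schwartz_bounded \<Psi>" and s: "s \<in> {0<..T}" and eta: "\<eta> > 0"
  shows "\<exists>b<s. \<forall>u w. b < u \<and> u < s \<and> b < w \<and> w < s \<and> 0 \<le> u \<and> 0 \<le> w \<longrightarrow> (\<forall>\<psi>\<in>\<Psi>. \<bar>X u \<psi> - X w \<psi>\<bar> \<le> \<eta>)"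
proof -
  have PsiS: "\<Psi> \<subseteq> schwartz" using Psi unfolding schwartz_bounded_def by blast
  obtain F where F: "finite F" "F \<subseteq> \<Psi>" "\<forall>\<psi>\<in>\<Psi>. \<exists>\<psi>0\<in>F. \<forall>t\<in>{0..T}. \<bar>X t \<psi> - X t \<psi>0\<bar> \<le> \<eta>/3"
    using strong_approx[OF X C Psi, of "\<eta>/3"] eta by auto
  have "\<forall>\<psi>0\<in>F. \<exists>l. eventually (\<lambda>u. \<bar>X u \<psi>0 - l\<bar> < \<eta>/6) (at_left s)"
    using cadlag_left_ev[OF dpaths_cadlag[OF X] s, of _ "\<eta>/6"] F(2) PsiS eta by auto
  then obtain L where "\<forall>\<psi>0\<in>F. eventually (\<lambda>u. \<bar>X u \<psi>0 - L \<psi>0\<bar> < \<eta>/6) (at_left s)"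
    by (rule bchoice[elim_format]) blast
  then have "eventually (\<lambda>u. \<forall>\<psi>0\<in>F. \<bar>X u \<psi>0 - L \<psi>0\<bar> < \<eta>/6) (at_left s)"
    by (rule eventually_ball_finite[OF F(1)])
  then obtain b where b: "b < s" "\<forall>y>b. y < s \<longrightarrow> (\<forall>\<psi>0\<in>F. \<bar>X y \<psi>0 - L \<psi>0\<bar> < \<eta>/6)"
    unfolding eventually_at_left_field by blast
  have "\<bar>X u \<psi> - X w \<psi>\<bar> \<le> \<eta>" if uw: "b < u" "u < s" "b < w" "w < s" "0 \<le> u" "0 \<le> w" and \<psi>: "\<psi> \<in> \<Psi>" for u w \<psi>
  proof -
    obtain \<psi>0 where \<psi>0: "\<psi>0 \<in> F" "\<forall>t\<in>{0..T}. \<bar>X t \<psi> - X t \<psi>0\<bar> \<le> \<eta>/3" using F(3) \<psi> by blast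
    have "\<bar>X u \<psi>0 - L \<psi>0\<bar> < \<eta>/6" "\<bar>X w \<psi>0 - L \<psi>0\<bar> < \<eta>/6" using b(2) uw \<psi>0(1) by auto
    moreover have "\<bar>X u \<psi> - X u \<psi>0\<bar> \<le> \<eta>/3" "\<bar>X w \<psi> - X w \<psi>0\<bar> \<le> \<eta>/3"
      using \<psi>0(2) uw s by auto
    ultimately show ?thesis by linarith
  qed
  then show ?thesis using b(1) by blast
qed

lemma strong_partition:
  assumes X: "X \<in> Dpaths T" and C: "C \<ge> 0" "\<And>s \<phi>. s \<in> {0..T} \<Longrightarrow> \<phi> \<in> schwartz \<Longrightarrow> \<bar>X s \<phi>\<bar> \<le> C * qn n \<phi>"
    and Psi: "schwartz_bounded \<Psi>" and eta: "\<eta> > 0"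
  shows "\<exists>A. finite A \<and> (\<forall>s u. 0 \<le> s \<and> s \<le> u \<and> u < T \<and> (\<forall>a\<in>A. \<not> (s < a \<and> a \<le> u)) \<longrightarrow>
            (\<forall>\<psi>\<in>\<Psi>. \<bar>X s \<psi> - X u \<psi>\<bar> \<le> \<eta>))"
  by (rule partition_lemma[where G="\<lambda>s \<psi>. X s \<psi>", OF strong_RC[OF X C Psi] strong_LC[OF X C Psi] eta])

lemma fine_grid:
  fixes T h :: real
  assumes "h > 0"
  shows "\<exists>A. finite A \<and> (\<forall>s u. 0 \<le> s \<and> s \<le> u \<and> u < T \<and> (\<forall>a\<in>A. \<not> (s < a \<and> a \<le> u)) \<longrightarrow> u - s < h)"
proof -
  define K where "K = nat \<lceil>T / h\<rceil>"
  define A where "A = (\<lambda>k. real k * h) ` {..K}"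
  have "u - s < h" if su: "0 \<le> s" "s \<le> u" "u < T" and noA: "\<forall>a\<in>A. \<not> (s < a \<and> a \<le> u)" for s u
  proof (rule ccontr)
    assume "\<not> u - s < h"
    define k where "k = nat \<lfloor>u / h\<rfloor>"
    have u0: "0 \<le> u / h" using su assms by simp
    have fk: "real k = real_of_int \<lfloor>u / h\<rfloor>" unfolding k_def using u0 by simp
    have "real_of_int \<lfloor>u / h\<rfloor> \<le> u / h" "u / h < real_of_int \<lfloor>u / h\<rfloor> + 1"
      using floor_correct[of "u / h"] by auto
    then have "real_of_int \<lfloor>u / h\<rfloor> * h \<le> u" "u < (real_of_int \<lfloor>u / h\<rfloor> + 1) * h"
      using assms by (simp_all only: pos_le_divide_eq pos_divide_less_eq)
    then have k1: "real k * h \<le> u" "u < real k * h + h" using fk by (simp_all add: algebra_simps)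
    have "k \<le> K"
    proof -
      have "u / h \<le> T / h" using su assms by (intro divide_right_mono) auto
      then have "\<lfloor>u / h\<rfloor> \<le> \<lceil>T / h\<rceil>" by linarith
      then show ?thesis unfolding k_def K_def by linarith
    qed
    then have "real k * h \<in> A" unfolding A_def by auto
    moreover have "s < real k * h" using k1 \<open>\<not> u - s < h\<close> by linarith
    ultimately show False using noA k1 by auto
  qed
  moreover have "finite A" unfolding A_def by simp
  ultimately show ?thesis by blast
qed


lemmas hk_integral_add = Henstock_Kurzweil_Integration.integral_add
lemmas hk_integral_diff = Henstock_Kurzweil_Integration.integral_diff
lemmas hk_integrable_add = Henstock_Kurzweil_Integration.integrable_add
lemmas hk_integrable_diff = Henstock_Kurzweil_Integration.integrable_diff
lemmas hk_integral_cong = Henstock_Kurzweil_Integration.integral_cong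
lemmas hk_integral_sum = Henstock_Kurzweil_Integration.integral_sum
lemmas hk_integrable_sum = Henstock_Kurzweil_Integration.integrable_sum

definition PsiB :: "real \<Rightarrow> (real \<Rightarrow> real) set \<Rightarrow> (real \<Rightarrow> real) set" where
  "PsiB T B = {transl a (deriv \<phi>) | a \<phi>. a \<in> {0..T} \<and> \<phi> \<in> B}"

lemma bounded_consts:
  assumes "schwartz_bounded B"
  obtains Cb where "\<And>j k \<phi> x. \<phi> \<in> B \<Longrightarrow> \<bar>x ^ k * DD j \<phi> x\<bar> \<le> Cb j k" "\<And>j k. Cb j k \<ge> 0"
proof -
  have "\<forall>j k. \<exists>C. \<forall>\<phi>\<in>B. \<forall>x. \<bar>x ^ k * DD j \<phi> x\<bar> \<le> C" using assms unfolding schwartz_bounded_def by blast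
  then obtain Cb where Cb: "\<And>j k \<phi> x. \<phi> \<in> B \<Longrightarrow> \<bar>x ^ k * DD j \<phi> x\<bar> \<le> Cb j k" by metis
  have "\<bar>x ^ k * DD j \<phi> x\<bar> \<le> \<bar>Cb j k\<bar>" if "\<phi> \<in> B" for j k \<phi> x
    using Cb[OF that, of x k j] by linarith
  then show ?thesis by (rule that[of "\<lambda>j k. \<bar>Cb j k\<bar>"]) auto
qed

lemma DD_transl_deriv: "\<phi> \<in> schwartz \<Longrightarrow> DD j (transl a (deriv \<phi>)) = transl a (DD (Suc j) \<phi>)"
  using DD_transl[OF schwartz_deriv_in, of \<phi> j a] DD_deriv[of j \<phi>] by simp

lemma schwartz_transl_deriv: "\<phi> \<in> schwartz \<Longrightarrow> transl a (deriv \<phi>) \<in> schwartz"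
  by (intro schwartz_transl schwartz_deriv_in)

lemma PsiB_bounded:
  assumes T: "T \<ge> 0" and B: "schwartz_bounded B"
  shows "schwartz_bounded (PsiB T B)"
proof -
  have BS: "B \<subseteq> schwartz" using B unfolding schwartz_bounded_def by blast
  obtain Cb where Cb: "\<And>j k \<phi> x. \<phi> \<in> B \<Longrightarrow> \<bar>x ^ k * DD j \<phi> x\<bar> \<le> Cb j k" "\<And>j k. Cb j k \<ge> 0"
    using bounded_consts[OF B] by metis
  have "PsiB T B \<subseteq> schwartz" unfolding PsiB_def using BS schwartz_transl_deriv by blast
  moreover have "\<exists>C. \<forall>\<psi>\<in>PsiB T B. \<forall>x. \<bar>x ^ k * DD j \<psi> x\<bar> \<le> C" for j k
  proof (intro exI ballI allI)
    fix \<psi> x assume "\<psi> \<in> PsiB T B"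
    then obtain a \<phi> where a: "a \<in> {0..T}" "\<phi> \<in> B" "\<psi> = transl a (deriv \<phi>)" unfolding PsiB_def by blast
    have "\<bar>x ^ k * DD (Suc j) \<phi> (x - a)\<bar> \<le> 2 ^ k * (Cb (Suc j) k + T ^ k * Cb (Suc j) 0)"
      by (rule transl_bound) (use Cb(1)[OF a(2), of _ _ "Suc j"] Cb(1)[OF a(2), of _ 0 "Suc j"] a(1) in auto)
    then show "\<bar>x ^ k * DD j \<psi> x\<bar> \<le> 2 ^ k * (Cb (Suc j) k + T ^ k * Cb (Suc j) 0)"
      unfolding a(3) unfolding DD_transl_deriv[OF subsetD[OF BS a(2)]] unfolding transl_def .
  qed
  ultimately show ?thesis unfolding schwartz_bounded_def by blast
qed

lemma PsiB_mem: "a \<in> {0..T} \<Longrightarrow> \<phi> \<in> B \<Longrightarrow> transl a (deriv \<phi>) \<in> PsiB T B"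
  unfolding PsiB_def by blast

lemma PsiB_lip:
  assumes T: "T \<ge> 0" and B: "schwartz_bounded B"
  shows "\<exists>Lq. Lq \<ge> 0 \<and> (\<forall>\<phi>\<in>B. \<forall>a\<in>{0..T}. \<forall>b\<in>{0..T}.
      qn n (\<lambda>x. transl a (deriv \<phi>) x - transl b (deriv \<phi>) x) \<le> Lq * \<bar>a - b\<bar>)"
proof -
  have BS: "B \<subseteq> schwartz" using B unfolding schwartz_bounded_def by blast
  obtain Cb where Cb: "\<And>j k \<phi> x. \<phi> \<in> B \<Longrightarrow> \<bar>x ^ k * DD j \<phi> x\<bar> \<le> Cb j k" "\<And>j k. Cb j k \<ge> 0"
    using bounded_consts[OF B] by metis
  define Kq where "Kq = (\<Sum>j\<le>n. \<Sum>k\<le>n. 2 ^ k * (Cb (Suc (Suc j)) k + T ^ k * Cb (Suc (Suc j)) 0))"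
  have Kq_ge: "2 ^ k * (Cb (Suc (Suc j)) k + T ^ k * Cb (Suc (Suc j)) 0) \<le> Kq" if "j \<le> n" "k \<le> n" for j k
  proof -
    have nn: "\<And>j k. 0 \<le> 2 ^ k * (Cb (Suc (Suc j)) k + T ^ k * Cb (Suc (Suc j)) 0)"
      using Cb(2) T by (intro mult_nonneg_nonneg add_nonneg_nonneg) auto
    have "2 ^ k * (Cb (Suc (Suc j)) k + T ^ k * Cb (Suc (Suc j)) 0) \<le> (\<Sum>k\<le>n. 2 ^ k * (Cb (Suc (Suc j)) k + T ^ k * Cb (Suc (Suc j)) 0))"
      by (rule member_le_sum[where f="\<lambda>k. 2 ^ k * (Cb (Suc (Suc j)) k + T ^ k * Cb (Suc (Suc j)) 0)"]) (use that nn in auto)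
    also have "\<dots> \<le> Kq" unfolding Kq_def
      by (rule member_le_sum[where f="\<lambda>j. \<Sum>k\<le>n. 2 ^ k * (Cb (Suc (Suc j)) k + T ^ k * Cb (Suc (Suc j)) 0)"])
         (use that nn in \<open>auto intro: sum_nonneg\<close>)
    finally show ?thesis .
  qed
  have Kq0: "Kq \<ge> 0" unfolding Kq_def using Cb(2) T by (intro sum_nonneg mult_nonneg_nonneg add_nonneg_nonneg) auto
  have "qn n (\<lambda>x. transl a (deriv \<phi>) x - transl b (deriv \<phi>) x) \<le> ((real n + 1)^2 * Kq) * \<bar>a - b\<bar>"
    if \<phi>: "\<phi> \<in> B" and ab: "a \<in> {0..T}" "b \<in> {0..T}" for \<phi> a b
  proof -
    have \<phi>S: "\<phi> \<in> schwartz" using \<phi> BS by auto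
    have "qn n (\<lambda>x. transl a (deriv \<phi>) x - transl b (deriv \<phi>) x) \<le> (real n + 1)^2 * (\<bar>a - b\<bar> * Kq)"
    proof (rule qn_le)
      fix j k x assume jk: "j \<le> n" "k \<le> n"
      have "\<bar>x ^ k * (DD (Suc j) \<phi> (x - a) - DD (Suc j) \<phi> (x - b))\<bar>
          \<le> \<bar>a - b\<bar> * (2 ^ k * (Cb (Suc (Suc j)) k + T ^ k * Cb (Suc (Suc j)) 0))"
        by (rule transl_diff_bound[OF schwartz_deriv[OF \<phi>S]])
           (use Cb(1)[OF \<phi>, of _ _ "Suc (Suc j)"] Cb(1)[OF \<phi>, of _ 0 "Suc (Suc j)"] ab in auto)
      also have "\<dots> \<le> \<bar>a - b\<bar> * Kq" by (intro mult_left_mono Kq_ge jk) auto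
      finally show "\<bar>x ^ k * DD j (\<lambda>x. transl a (deriv \<phi>) x - transl b (deriv \<phi>) x) x\<bar> \<le> \<bar>a - b\<bar> * Kq"
        unfolding DD_diff[OF schwartz_transl_deriv[OF \<phi>S] schwartz_transl_deriv[OF \<phi>S]]
        unfolding DD_transl_deriv[OF \<phi>S] unfolding transl_def .
    qed
    then show ?thesis by (simp add: algebra_simps)
  qed
  then show ?thesis using Kq0 by (intro exI[of _ "(real n + 1)^2 * Kq"]) auto
qed

lemma int_bound:
  fixes f :: "real \<Rightarrow> real"
  assumes "f integrable_on {a..b}" "a \<le> b" "\<And>s. s \<in> {a..b} \<Longrightarrow> \<bar>f s\<bar> \<le> K"
  shows "\<bar>integral {a..b} f\<bar> \<le> (b - a) * K"
proof -
  have "norm (integral {a..b} f) \<le> integral {a..b} (\<lambda>s. K)"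
    by (rule integral_norm_bound_integral) (use assms in auto)
  then show ?thesis using assms(2) by simp
qed

lemma G_integrable:
  assumes X: "X \<in> Dpaths T" and T: "T \<ge> 0"
    and C: "C \<ge> 0" "\<And>s \<phi>. s \<in> {0..T} \<Longrightarrow> \<phi> \<in> schwartz \<Longrightarrow> \<bar>X s \<phi>\<bar> \<le> C * qn n \<phi>"
    and B: "schwartz_bounded B" and \<phi>: "\<phi> \<in> B" and t: "t \<in> {0..T}"
  shows "(\<lambda>s. X s (transl (t - s) (deriv \<phi>))) integrable_on {0..t}"
proof -
  have BS: "B \<subseteq> schwartz" using B unfolding schwartz_bounded_def by blast
  have \<phi>S: "\<phi> \<in> schwartz" using \<phi> BS by auto
  have Psi: "schwartz_bounded (PsiB T B)" by (rule PsiB_bounded[OF T B])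
  obtain Lq where Lq: "Lq \<ge> 0" "\<forall>\<phi>\<in>B. \<forall>a\<in>{0..T}. \<forall>b\<in>{0..T}.
      qn n (\<lambda>x. transl a (deriv \<phi>) x - transl b (deriv \<phi>) x) \<le> Lq * \<bar>a - b\<bar>"
    using PsiB_lip[OF T B, of n] by blast
  show ?thesis
  proof (rule integrable_regulated)
    show "0 \<le> t" using t by simp
  next
    fix \<eta> :: real assume eta: "\<eta> > 0"
    obtain A1 where A1: "finite A1" "\<forall>s u. 0 \<le> s \<and> s \<le> u \<and> u < T \<and> (\<forall>a\<in>A1. \<not> (s < a \<and> a \<le> u)) \<longrightarrow>
            (\<forall>\<psi>\<in>PsiB T B. \<bar>X s \<psi> - X u \<psi>\<bar> \<le> \<eta>/2)"
      using strong_partition[OF X C Psi, of "\<eta>/2"] eta by auto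
    define h where "h = \<eta> / (2 * (C * Lq + 1))"
    have CL0: "C * Lq \<ge> 0" using C(1) Lq(1) by simp
    have h0: "h > 0" unfolding h_def using eta CL0 by simp
    have Ch: "C * Lq * h \<le> \<eta>/2"
    proof -
      have "C * Lq * h = (\<eta>/2) * (C * Lq / (C * Lq + 1))" unfolding h_def using CL0 by simp
      also have "\<dots> \<le> (\<eta>/2) * 1" using CL0 eta by (intro mult_left_mono) auto
      finally show ?thesis by simp
    qed
    obtain A2 where A2: "finite A2" "\<forall>s u. 0 \<le> s \<and> s \<le> u \<and> u < T \<and> (\<forall>a\<in>A2. \<not> (s < a \<and> a \<le> u)) \<longrightarrow> u - s < h"
      using fine_grid[OF h0, of T] by blast
    have "\<bar>X s (transl (t - s) (deriv \<phi>)) - X u (transl (t - u) (deriv \<phi>))\<bar> \<le> \<eta>"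
      if su: "0 \<le> s" "s \<le> u" "u < t" and noA: "\<forall>x\<in>A1 \<union> A2. \<not> (s < x \<and> x \<le> u)" for s u
    proof -
      have uT: "u < T" using su t by auto
      have sT: "s \<in> {0..T}" "u \<in> {0..T}" using su uT by auto
      have ts: "t - s \<in> {0..T}" "t - u \<in> {0..T}" using su t by auto
      have mem: "transl (t - s) (deriv \<phi>) \<in> PsiB T B" by (rule PsiB_mem[OF ts(1) \<phi>])
      have e1: "\<bar>X s (transl (t - s) (deriv \<phi>)) - X u (transl (t - s) (deriv \<phi>))\<bar> \<le> \<eta>/2"
        using A1(2) su uT noA mem by blast
      have "u - s < h" using A2(2) su uT noA by blast
      have "\<bar>X u (transl (t - s) (deriv \<phi>)) - X u (transl (t - u) (deriv \<phi>))\<bar>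
          = \<bar>X u (\<lambda>x. transl (t - s) (deriv \<phi>) x - transl (t - u) (deriv \<phi>) x)\<bar>"
        using tempered_diff[OF dpaths_tempered[OF X sT(2)] schwartz_transl_deriv[OF \<phi>S] schwartz_transl_deriv[OF \<phi>S]]
        by simp
      also have "\<dots> \<le> C * qn n (\<lambda>x. transl (t - s) (deriv \<phi>) x - transl (t - u) (deriv \<phi>) x)"
        by (rule C(2)[OF sT(2) schwartz_diff[OF schwartz_transl_deriv[OF \<phi>S] schwartz_transl_deriv[OF \<phi>S]]])
      also have "\<dots> \<le> C * (Lq * \<bar>(t - s) - (t - u)\<bar>)" by (rule mult_left_mono[OF Lq(2)[rule_format, OF \<phi> ts] C(1)])
      also have "\<dots> \<le> C * (Lq * h)" using \<open>u - s < h\<close> su C(1) Lq(1) by (intro mult_left_mono) auto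
      finally have e2: "\<bar>X u (transl (t - s) (deriv \<phi>)) - X u (transl (t - u) (deriv \<phi>))\<bar> \<le> \<eta>/2"
        using Ch by (simp add: mult.assoc)
      show ?thesis using e1 e2 by linarith
    qed
    then show "\<exists>A. finite A \<and> (\<forall>s u. 0 \<le> s \<and> s \<le> u \<and> u < t \<and> (\<forall>x\<in>A. \<not> (s < x \<and> x \<le> u)) \<longrightarrow>
        \<bar>X s (transl (t - s) (deriv \<phi>)) - X u (transl (t - u) (deriv \<phi>))\<bar> \<le> \<eta>)"
      using A1(1) A2(1) by (intro exI[of _ "A1 \<union> A2"]) auto
  qed
qed

lemma singleton_bounded: "\<phi> \<in> schwartz \<Longrightarrow> schwartz_bounded {\<phi>}"
  unfolding schwartz_bounded_def using schwartz_bound by auto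


lemma integrable_cmult_real:
  fixes f :: "real \<Rightarrow> real"
  shows "f integrable_on S \<Longrightarrow> (\<lambda>x. c * f x) integrable_on S"
  using integrable_cmul[of f S c] by simp

lemma deriv_lin:
  assumes "\<phi> \<in> schwartz" "\<psi> \<in> schwartz"
  shows "deriv (\<lambda>x. a * \<phi> x + b * \<psi> x) = (\<lambda>x. a * deriv \<phi> x + b * deriv \<psi> x)"
  using DD_lin[OF assms, of 1 a b] by simp

lemma transl_lin: "transl c (\<lambda>x. a * f x + b * g x) = (\<lambda>x. a * transl c f x + b * transl c g x)"
  by (simp add: transl_def)

lemma qn_transl_deriv:
  assumes \<phi>: "\<phi> \<in> schwartz" and T: "T \<ge> 0" and a: "a \<in> {0..T}"
  shows "qn n (transl a (deriv \<phi>)) \<le> ((real n + 1)^2 * (2 ^ n * (1 + (1 + T) ^ n))) * qn (Suc n) \<phi>"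
proof -
  define q where "q = qn (Suc n) \<phi>"
  have q0: "q \<ge> 0" unfolding q_def by (rule qn_nonneg[OF \<phi>])
  have "qn n (transl a (deriv \<phi>)) \<le> (real n + 1)^2 * (2 ^ n * (1 + (1 + T) ^ n) * q)"
  proof (rule qn_le)
    fix j k x assume jk: "j \<le> n" "k \<le> n"
    have "\<bar>x ^ k * DD (Suc j) \<phi> (x - a)\<bar> \<le> 2 ^ k * (schwartz_seminorm (Suc j) k \<phi> + T ^ k * schwartz_seminorm (Suc j) 0 \<phi>)"
      by (rule transl_bound) (use sn_upper[OF \<phi>, of _ k "Suc j"] sn_upper[OF \<phi>, of _ 0 "Suc j"] a in auto)
    also have "\<dots> \<le> 2 ^ k * (q + T ^ k * q)"
    proof -
      have "schwartz_seminorm (Suc j) k \<phi> \<le> q" "schwartz_seminorm (Suc j) 0 \<phi> \<le> q"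
        unfolding q_def using jk by (auto intro!: sn_le_qn[OF \<phi>])
      then show ?thesis using T by (intro mult_left_mono add_mono) auto
    qed
    also have "\<dots> = 2 ^ k * (1 + T ^ k) * q" by (simp add: algebra_simps)
    also have "\<dots> \<le> 2 ^ n * (1 + (1 + T) ^ n) * q"
    proof -
      have "(2::real) ^ k \<le> 2 ^ n" using jk by (intro power_increasing) auto
      moreover have "T ^ k \<le> (1 + T) ^ n"
      proof -
        have "T ^ k \<le> (1 + T) ^ k" using T by (intro power_mono) auto
        also have "\<dots> \<le> (1 + T) ^ n" using jk T by (intro power_increasing) auto
        finally show ?thesis .
      qed
      ultimately show ?thesis using q0 T by (intro mult_right_mono mult_mono) auto
    qed
    finally show "\<bar>x ^ k * DD j (transl a (deriv \<phi>)) x\<bar> \<le> 2 ^ n * (1 + (1 + T) ^ n) * q"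
      unfolding DD_transl_deriv[OF \<phi>] unfolding transl_def .
  qed
  then show ?thesis unfolding q_def by (simp add: mult.assoc)
qed

lemma Nmap_tempered:
  assumes X: "X \<in> Dpaths T" and T: "T \<ge> 0" and t: "t \<in> {0..T}"
  shows "tempered (Nmap X t)"
proof -
  obtain C n where C: "C \<ge> 0" "\<forall>s\<in>{0..T}. \<forall>\<phi>\<in>schwartz. \<bar>X s \<phi>\<bar> \<le> C * qn n \<phi>"
    using dpaths_ub[OF X] by blast
  have Cb: "\<And>s \<phi>. s \<in> {0..T} \<Longrightarrow> \<phi> \<in> schwartz \<Longrightarrow> \<bar>X s \<phi>\<bar> \<le> C * qn n \<phi>" using C(2) by blast
  have int: "(\<lambda>s. X s (transl (t - s) (deriv \<phi>))) integrable_on {0..t}" if "\<phi> \<in> schwartz" for \<phi>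
    by (rule G_integrable[OF X T C(1) Cb singleton_bounded[OF that] singletonI t])
  have lin: "Nmap X t (\<lambda>x. a * \<phi> x + b * \<psi> x) = a * Nmap X t \<phi> + b * Nmap X t \<psi>"
    if S: "\<phi> \<in> schwartz" "\<psi> \<in> schwartz" for a b \<phi> \<psi>
  proof -
    have pt: "X s (transl (t - s) (deriv (\<lambda>x. a * \<phi> x + b * \<psi> x)))
        = a * X s (transl (t - s) (deriv \<phi>)) + b * X s (transl (t - s) (deriv \<psi>))" if s: "s \<in> {0..t}" for s
    proof -
      have sT: "s \<in> {0..T}" using s t by auto
      show ?thesis unfolding deriv_lin[OF S] transl_lin
        by (rule tempered_lin[OF dpaths_tempered[OF X sT] schwartz_transl_deriv[OF S(1)] schwartz_transl_deriv[OF S(2)]])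
    qed
    have "integral {0..t} (\<lambda>s. X s (transl (t - s) (deriv (\<lambda>x. a * \<phi> x + b * \<psi> x))))
        = integral {0..t} (\<lambda>s. a * X s (transl (t - s) (deriv \<phi>)) + b * X s (transl (t - s) (deriv \<psi>)))"
      by (rule hk_integral_cong) (rule pt)
    also have "\<dots> = integral {0..t} (\<lambda>s. a * X s (transl (t - s) (deriv \<phi>))) + integral {0..t} (\<lambda>s. b * X s (transl (t - s) (deriv \<psi>)))"
      by (rule hk_integral_add) (intro integrable_cmult_real int S)+
    also have "\<dots> = a * integral {0..t} (\<lambda>s. X s (transl (t - s) (deriv \<phi>))) + b * integral {0..t} (\<lambda>s. X s (transl (t - s) (deriv \<psi>)))"
      using integral_mult[OF int[OF S(1)], of a] integral_mult[OF int[OF S(2)], of b] by simp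
    finally show ?thesis unfolding Nmap_def by (simp add: algebra_simps)
  qed
  define Kt where "Kt = (real n + 1)^2 * (2 ^ n * (1 + (1 + T) ^ n))"
  have Kt0: "Kt \<ge> 0" unfolding Kt_def using T by simp
  have bnd: "\<bar>Nmap X t \<phi>\<bar> \<le> (T * C * Kt) * qn (Suc n) \<phi>" if \<phi>: "\<phi> \<in> schwartz" for \<phi>
  proof -
    have "\<bar>X s (transl (t - s) (deriv \<phi>))\<bar> \<le> C * Kt * qn (Suc n) \<phi>" if s: "s \<in> {0..t}" for s
    proof -
      have sT: "s \<in> {0..T}" "t - s \<in> {0..T}" using s t by auto
      have "\<bar>X s (transl (t - s) (deriv \<phi>))\<bar> \<le> C * qn n (transl (t - s) (deriv \<phi>))"
        by (rule Cb[OF sT(1) schwartz_transl_deriv[OF \<phi>]])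
      also have "\<dots> \<le> C * (Kt * qn (Suc n) \<phi>)"
        unfolding Kt_def by (rule mult_left_mono[OF qn_transl_deriv[OF \<phi> T sT(2)] C(1)])
      finally show ?thesis by (simp add: mult.assoc)
    qed
    then have "\<bar>integral {0..t} (\<lambda>s. X s (transl (t - s) (deriv \<phi>)))\<bar> \<le> (t - 0) * (C * Kt * qn (Suc n) \<phi>)"
      using t by (intro int_bound int[OF \<phi>]) auto
    also have "\<dots> \<le> T * (C * Kt * qn (Suc n) \<phi>)"
      using t C(1) Kt0 qn_nonneg[OF \<phi>] by (intro mult_right_mono) auto
    finally show ?thesis unfolding Nmap_def by (simp add: mult.assoc)
  qed
  show ?thesis unfolding tempered_def
  proof (intro conjI allI impI)
    fix a b \<phi> \<psi> assume "\<phi> \<in> schwartz" "\<psi> \<in> schwartz"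
    then show "Nmap X t (\<lambda>x. a * \<phi> x + b * \<psi> x) = a * Nmap X t \<phi> + b * Nmap X t \<psi>" by (rule lin)
  next
    show "\<exists>C n. \<forall>\<phi>\<in>schwartz. \<bar>Nmap X t \<phi>\<bar> \<le> C * (\<Sum>j\<le>n. \<Sum>k\<le>n. schwartz_seminorm j k \<phi>)"
      using bnd unfolding qn_def by blast
  qed
qed

lemma Nmap_lip:
  assumes X: "X \<in> Dpaths T" and T: "T \<ge> 0" and \<phi>: "\<phi> \<in> schwartz"
  shows "\<exists>Lc. \<forall>t\<in>{0..T}. \<forall>t'\<in>{0..T}. t \<le> t' \<longrightarrow> \<bar>Nmap X t' \<phi> - Nmap X t \<phi>\<bar> \<le> Lc * (t' - t)"
proof -
  obtain C n where C: "C \<ge> 0" "\<forall>s\<in>{0..T}. \<forall>\<phi>\<in>schwartz. \<bar>X s \<phi>\<bar> \<le> C * qn n \<phi>"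
    using dpaths_ub[OF X] by blast
  have Cb: "\<And>s \<phi>. s \<in> {0..T} \<Longrightarrow> \<phi> \<in> schwartz \<Longrightarrow> \<bar>X s \<phi>\<bar> \<le> C * qn n \<phi>" using C(2) by blast
  have B: "schwartz_bounded {\<phi>}" by (rule singleton_bounded[OF \<phi>])
  obtain Q where Q: "\<forall>\<psi>\<in>PsiB T {\<phi>}. qn n \<psi> \<le> Q" using bounded_qn[OF PsiB_bounded[OF T B]] by blast
  obtain Lq where Lq: "Lq \<ge> 0" "\<forall>\<phi>'\<in>{\<phi>}. \<forall>a\<in>{0..T}. \<forall>b\<in>{0..T}.
      qn n (\<lambda>x. transl a (deriv \<phi>') x - transl b (deriv \<phi>') x) \<le> Lq * \<bar>a - b\<bar>"
    using PsiB_lip[OF T B, of n] by blast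
  have "\<bar>Nmap X t' \<phi> - Nmap X t \<phi>\<bar> \<le> (C * Q + T * (C * Lq)) * (t' - t)"
    if tt: "t \<in> {0..T}" "t' \<in> {0..T}" "t \<le> t'" for t t'
  proof -
    define G' where "G' s = X s (transl (t' - s) (deriv \<phi>))" for s
    define G where "G s = X s (transl (t - s) (deriv \<phi>))" for s
    have I': "G' integrable_on {0..t'}" unfolding G'_def
      by (rule G_integrable[OF X T C(1) Cb B singletonI tt(2)])
    have I: "G integrable_on {0..t}" unfolding G_def
      by (rule G_integrable[OF X T C(1) Cb B singletonI tt(1)])
    have I'1: "G' integrable_on {0..t}" by (rule integrable_subinterval_real[OF I']) (use tt in auto)
    have I'2: "G' integrable_on {t..t'}" by (rule integrable_subinterval_real[OF I']) (use tt in auto)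
    have comb: "integral {0..t} G' + integral {t..t'} G' = integral {0..t'} G'"
      by (rule hk_integral_combine[OF _ tt(3) I']) (use tt in auto)
    have b1: "\<bar>integral {t..t'} G'\<bar> \<le> (t' - t) * (C * Q)"
    proof (rule int_bound[OF I'2 tt(3)])
      fix s assume s: "s \<in> {t..t'}"
      have sT: "s \<in> {0..T}" "t' - s \<in> {0..T}" using s tt by auto
      have "\<bar>G' s\<bar> \<le> C * qn n (transl (t' - s) (deriv \<phi>))"
        unfolding G'_def by (rule Cb[OF sT(1) schwartz_transl_deriv[OF \<phi>]])
      also have "\<dots> \<le> C * Q" using Q PsiB_mem[OF sT(2), of \<phi> "{\<phi>}"] C(1) by (intro mult_left_mono) auto
      finally show "\<bar>G' s\<bar> \<le> C * Q" .
    qed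
    have b2: "\<bar>integral {0..t} (\<lambda>s. G' s - G s)\<bar> \<le> (t - 0) * (C * (Lq * (t' - t)))"
    proof (rule int_bound[OF hk_integrable_diff[OF I'1 I]])
      show "0 \<le> t" using tt by simp
      fix s assume s: "s \<in> {0..t}"
      have sT: "s \<in> {0..T}" "t' - s \<in> {0..T}" "t - s \<in> {0..T}" using s tt by auto
      have S2: "transl (t' - s) (deriv \<phi>) \<in> schwartz" "transl (t - s) (deriv \<phi>) \<in> schwartz"
        using schwartz_transl_deriv[OF \<phi>] by auto
      have "\<bar>G' s - G s\<bar> = \<bar>X s (\<lambda>x. transl (t' - s) (deriv \<phi>) x - transl (t - s) (deriv \<phi>) x)\<bar>"
        unfolding G'_def G_def using tempered_diff[OF dpaths_tempered[OF X sT(1)] S2] by simp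
      also have "\<dots> \<le> C * qn n (\<lambda>x. transl (t' - s) (deriv \<phi>) x - transl (t - s) (deriv \<phi>) x)"
        by (rule Cb[OF sT(1) schwartz_diff[OF S2]])
      also have "\<dots> \<le> C * (Lq * \<bar>(t' - s) - (t - s)\<bar>)"
        by (rule mult_left_mono[OF Lq(2)[rule_format, OF _ sT(2) sT(3)] C(1)]) simp
      also have "\<dots> = C * (Lq * (t' - t))" using tt by simp
      finally show "\<bar>G' s - G s\<bar> \<le> C * (Lq * (t' - t))" .
    qed
    have eq: "Nmap X t' \<phi> - Nmap X t \<phi> = - integral {0..t} (\<lambda>s. G' s - G s) - integral {t..t'} G'"
    proof -
      have e1: "Nmap X t' \<phi> = - integral {0..t'} G'" unfolding Nmap_def G'_def by simp
      have e2: "Nmap X t \<phi> = - integral {0..t} G" unfolding Nmap_def G_def by simp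
      have e3: "integral {0..t} (\<lambda>s. G' s - G s) = integral {0..t} G' - integral {0..t} G"
        by (rule hk_integral_diff[OF I'1 I])
      show ?thesis unfolding e1 e2 e3 using comb by linarith
    qed
    have "\<bar>Nmap X t' \<phi> - Nmap X t \<phi>\<bar> \<le> t * (C * (Lq * (t' - t))) + (t' - t) * (C * Q)"
      unfolding eq using b1 b2 by simp
    also have "t * (C * (Lq * (t' - t))) \<le> T * (C * (Lq * (t' - t)))"
      using tt C(1) Lq(1) by (intro mult_right_mono) auto
    finally show ?thesis by (simp add: algebra_simps)
  qed
  then show ?thesis by blast
qed

lemma Nmap_cont:
  assumes X: "X \<in> Dpaths T" and T: "T \<ge> 0" and \<phi>: "\<phi> \<in> schwartz"
  shows "continuous_on {0..T} (\<lambda>t. Nmap X t \<phi>)"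
proof -
  obtain Lc where Lc: "\<forall>t\<in>{0..T}. \<forall>t'\<in>{0..T}. t \<le> t' \<longrightarrow> \<bar>Nmap X t' \<phi> - Nmap X t \<phi>\<bar> \<le> Lc * (t' - t)"
    using Nmap_lip[OF X T \<phi>] by blast
  have "(max Lc 0)-lipschitz_on {0..T} (\<lambda>t. Nmap X t \<phi>)"
    unfolding lipschitz_on_def
  proof (intro conjI ballI)
    fix x y assume xy: "x \<in> {0..T}" "y \<in> {0..T}"
    have "\<bar>Nmap X x \<phi> - Nmap X y \<phi>\<bar> \<le> max Lc 0 * \<bar>x - y\<bar>"
    proof (cases "x \<le> y")
      case True
      then have "\<bar>Nmap X y \<phi> - Nmap X x \<phi>\<bar> \<le> Lc * (y - x)" using Lc xy by blast
      also have "\<dots> \<le> max Lc 0 * (y - x)" using True by (intro mult_right_mono) auto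
      finally show ?thesis using True by (simp add: abs_minus_commute)
    next
      case False
      then have "\<bar>Nmap X x \<phi> - Nmap X y \<phi>\<bar> \<le> Lc * (x - y)" using Lc xy by auto
      also have "\<dots> \<le> max Lc 0 * (x - y)" using False by (intro mult_right_mono) auto
      finally show ?thesis using False by simp
    qed
    then show "dist (Nmap X x \<phi>) (Nmap X y \<phi>) \<le> max Lc 0 * dist x y" by (simp add: dist_real_def)
  qed auto
  then show ?thesis by (rule lipschitz_on_continuous_on)
qed

lemma Nmap_Cpaths:
  assumes X: "X \<in> Dpaths T" and T: "T \<ge> 0"
  shows "Nmap X \<in> Cpaths T"
  unfolding Cpaths_def using Nmap_tempered[OF X T] Nmap_cont[OF X T] by blast


lemma time_change_end:
  assumes r: "r \<in> time_changes T" and T: "T \<ge> 0"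
  shows "r T = T" "\<And>u. u \<in> {0..T} \<Longrightarrow> r u = T \<Longrightarrow> u = T"
proof -
  have sm: "strict_mono_on {0..T} r" and im: "r ` {0..T} = {0..T}" using r unfolding time_changes_def by auto
  have "T \<in> r ` {0..T}" using im T by auto
  then obtain w where w: "w \<in> {0..T}" "r w = T" by auto
  have rT: "r T \<in> {0..T}" using im T by auto
  show rTT: "r T = T"
  proof (cases "w < T")
    case True
    then have "r w < r T" using strict_mono_onD[OF sm w(1)] T by auto
    then show ?thesis using w rT by auto
  next
    case False then show ?thesis using w by auto
  qed
  fix u assume u: "u \<in> {0..T}" "r u = T"
  show "u = T"
  proof (rule ccontr)
    assume "u \<noteq> T"
    then have "u < T" using u by auto
    then have "r u < r T" using strict_mono_onD[OF sm u(1)] T by auto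
    then show False using u rTT by auto
  qed
qed

lemma ind_integral:
  fixes a d t :: real
  assumes "d \<ge> 0"
  shows "(\<lambda>s. if s \<in> {a - d..a + d} then 1 else (0::real)) integrable_on {0..t}"
    "integral {0..t} (\<lambda>s. if s \<in> {a - d..a + d} then 1 else (0::real)) \<le> 2 * d"
proof -
  have eq: "{a - d..a + d} \<inter> {0..t} = {max (a - d) 0..min (a + d) t}" by auto
  show "(\<lambda>s. if s \<in> {a - d..a + d} then 1 else (0::real)) integrable_on {0..t}"
    unfolding Henstock_Kurzweil_Integration.integrable_restrict_Int eq by (rule integrable_const_ivl)
  have "integral {0..t} (\<lambda>s. if s \<in> {a - d..a + d} then 1 else (0::real)) = integral {max (a - d) 0..min (a + d) t} (\<lambda>s. 1::real)"
    unfolding Henstock_Kurzweil_Integration.integral_restrict_Int eq by simp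
  also have "\<dots> \<le> 2 * d" using assms by (auto simp: content_real_if)
  finally show "integral {0..t} (\<lambda>s. if s \<in> {a - d..a + d} then 1 else (0::real)) \<le> 2 * d" .
qed

lemma Nmap_skorokhod:
  assumes X: "X \<in> Dpaths T" and T: "T > 0" and B': "schwartz_bounded B'" and eps: "\<epsilon> > 0"
  shows "\<exists>B \<delta>. schwartz_bounded B \<and> \<delta> > 0 \<and>
          (\<forall>Y\<in>Dpaths T. skorokhod_close T B \<delta> X Y \<longrightarrow> uniform_close T B' \<epsilon> (Nmap X) (Nmap Y))"
proof -
  have T0: "T \<ge> 0" using T by simp
  have B'S: "B' \<subseteq> schwartz" using B' unfolding schwartz_bounded_def by blast
  obtain C n where C: "C \<ge> 0" "\<forall>s\<in>{0..T}. \<forall>\<phi>\<in>schwartz. \<bar>X s \<phi>\<bar> \<le> C * qn n \<phi>"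
    using dpaths_ub[OF X] by blast
  have Cb: "\<And>s \<phi>. s \<in> {0..T} \<Longrightarrow> \<phi> \<in> schwartz \<Longrightarrow> \<bar>X s \<phi>\<bar> \<le> C * qn n \<phi>" using C(2) by blast
  define \<Psi> where "\<Psi> = PsiB T B'"
  have Psi: "schwartz_bounded \<Psi>" unfolding \<Psi>_def by (rule PsiB_bounded[OF T0 B'])
  have PsiS: "\<Psi> \<subseteq> schwartz" using Psi unfolding schwartz_bounded_def by blast
  obtain Q where Q: "\<forall>\<psi>\<in>\<Psi>. qn n \<psi> \<le> Q" using bounded_qn[OF Psi] by blast
  define Q' where "Q' = max Q 0"
  have Q': "Q' \<ge> 0" "\<And>\<psi>. \<psi> \<in> \<Psi> \<Longrightarrow> qn n \<psi> \<le> Q'" using Q unfolding Q'_def by force+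
  define K where "K = 2 * C * Q'"
  have K0: "K \<ge> 0" unfolding K_def using C(1) Q'(1) by simp
  have XK: "\<bar>X s \<psi>\<bar> \<le> C * Q'" if "s \<in> {0..T}" "\<psi> \<in> \<Psi>" for s \<psi>
  proof -
    have "\<bar>X s \<psi>\<bar> \<le> C * qn n \<psi>" using Cb[OF that(1)] that(2) PsiS by blast
    also have "\<dots> \<le> C * Q'" using Q'(2)[OF that(2)] C(1) by (rule mult_left_mono)
    finally show ?thesis .
  qed
  define \<eta> where "\<eta> = \<epsilon> / (3 * (T + 1))"
  have eta0: "\<eta> > 0" unfolding \<eta>_def using eps T by simp
  obtain A where A: "finite A" "\<forall>s u. 0 \<le> s \<and> s \<le> u \<and> u < T \<and> (\<forall>a\<in>A. \<not> (s < a \<and> a \<le> u)) \<longrightarrow>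
            (\<forall>\<psi>\<in>\<Psi>. \<bar>X s \<psi> - X u \<psi>\<bar> \<le> \<eta>)"
    using strong_partition[OF X C(1) Cb Psi eta0] by blast
  define m where "m = real (card A)"
  have m0: "m \<ge> 0" unfolding m_def by simp
  define \<delta> where "\<delta> = min (\<epsilon> / (3 * (T + 1))) (\<epsilon> / (3 * (2 * K * m + 1)))"
  have KM: "2 * K * m + 1 > 0" using K0 m0 by (smt (verit) mult_nonneg_nonneg)
  have \<delta>0: "\<delta> > 0" unfolding \<delta>_def using eps T KM by simp
  have Td: "T * \<delta> \<le> \<epsilon> / 3"
  proof -
    have "T * \<delta> \<le> T * (\<epsilon> / (3 * (T + 1)))" unfolding \<delta>_def using T by (intro mult_left_mono) auto
    also have "\<dots> = (\<epsilon> / 3) * (T / (T + 1))" by (simp add: field_simps)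
    also have "\<dots> \<le> (\<epsilon> / 3) * 1" using T eps by (intro mult_left_mono) auto
    finally show ?thesis by simp
  qed
  have Te: "T * \<eta> \<le> \<epsilon> / 3"
  proof -
    have "T * \<eta> = (\<epsilon> / 3) * (T / (T + 1))" unfolding \<eta>_def by (simp add: field_simps)
    also have "\<dots> \<le> (\<epsilon> / 3) * 1" using T eps by (intro mult_left_mono) auto
    finally show ?thesis by simp
  qed
  have Kd: "K * m * (2 * \<delta>) \<le> \<epsilon> / 3"
  proof -
    have "K * m * (2 * \<delta>) = (2 * K * m) * \<delta>" by simp
    also have "\<dots> \<le> (2 * K * m) * (\<epsilon> / (3 * (2 * K * m + 1)))" unfolding \<delta>_def
      using K0 m0 by (intro mult_left_mono) auto
    also have "\<dots> = (\<epsilon> / 3) * ((2 * K * m) / (2 * K * m + 1))" using KM by (simp add: field_simps)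
    also have "\<dots> \<le> (\<epsilon> / 3) * 1" using KM eps by (intro mult_left_mono) auto
    finally show ?thesis by simp
  qed
  have main: "uniform_close T B' \<epsilon> (Nmap X) (Nmap Y)"
    if Y: "Y \<in> Dpaths T" and sk: "skorokhod_close T \<Psi> \<delta> X Y" for Y
  proof -
    obtain CY nY where CY: "CY \<ge> 0" "\<forall>s\<in>{0..T}. \<forall>\<phi>\<in>schwartz. \<bar>Y s \<phi>\<bar> \<le> CY * qn nY \<phi>"
      using dpaths_ub[OF Y] by blast
    have CYb: "\<And>s \<phi>. s \<in> {0..T} \<Longrightarrow> \<phi> \<in> schwartz \<Longrightarrow> \<bar>Y s \<phi>\<bar> \<le> CY * qn nY \<phi>" using CY(2) by blast
    obtain r where r: "r \<in> time_changes T" "\<forall>t\<in>{0..T}. \<bar>r t - t\<bar> \<le> \<delta> \<and> (\<forall>\<phi>\<in>\<Psi>. \<bar>X t \<phi> - Y (r t) \<phi>\<bar> \<le> \<delta>)"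
      using sk unfolding skorokhod_close_def by blast
    have im: "r ` {0..T} = {0..T}" using r(1) unfolding time_changes_def by auto
    show ?thesis unfolding uniform_close_def
    proof (intro ballI)
      fix t \<phi> assume t: "t \<in> {0..T}" and \<phi>: "\<phi> \<in> B'"
      have \<phi>S: "\<phi> \<in> schwartz" using \<phi> B'S by auto
      define GX where "GX s = X s (transl (t - s) (deriv \<phi>))" for s
      define GY where "GY s = Y s (transl (t - s) (deriv \<phi>))" for s
      have IX: "GX integrable_on {0..t}" unfolding GX_def by (rule G_integrable[OF X T0 C(1) Cb B' \<phi> t])
      have IY: "GY integrable_on {0..t}" unfolding GY_def by (rule G_integrable[OF Y T0 CY(1) CYb B' \<phi> t])
      define ind where "ind a s = (if s \<in> {a - \<delta>..a + \<delta>} then 1 else (0::real))" for a s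
      define g where "g s = \<eta> + \<delta> + K * (\<Sum>a\<in>A. ind a s)" for s
      have ind_int: "ind a integrable_on {0..t}" for a unfolding ind_def by (rule ind_integral(1)) (use \<delta>0 in simp)
      have ind_le: "integral {0..t} (ind a) \<le> 2 * \<delta>" for a unfolding ind_def by (rule ind_integral(2)) (use \<delta>0 in simp)
      have ind0: "ind a s \<ge> 0" for a s unfolding ind_def by simp
      have Ig: "g integrable_on {0..t}" unfolding g_def
        by (intro hk_integrable_add integrable_cmult_real hk_integrable_sum A(1) ind_int integrable_const_ivl)
      have intg: "integral {0..t} g \<le> \<epsilon>"
      proof -
        have "integral {0..t} g = integral {0..t} (\<lambda>s. \<eta> + \<delta>) + integral {0..t} (\<lambda>s. K * (\<Sum>a\<in>A. ind a s))"
          unfolding g_def by (rule hk_integral_add) (intro integrable_const_ivl integrable_cmult_real hk_integrable_sum A(1) ind_int)+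
        also have "integral {0..t} (\<lambda>s. K * (\<Sum>a\<in>A. ind a s)) = K * (\<Sum>a\<in>A. integral {0..t} (ind a))"
          using integral_mult[OF hk_integrable_sum[OF A(1) ind_int], of K] hk_integral_sum[OF A(1) ind_int] by simp
        also have "(\<Sum>a\<in>A. integral {0..t} (ind a)) \<le> (\<Sum>a\<in>A. 2 * \<delta>)" by (intro sum_mono ind_le)
        also have "(\<Sum>a\<in>A. 2 * \<delta>) = m * (2 * \<delta>)" unfolding m_def by simp
        finally have "integral {0..t} g \<le> t * (\<eta> + \<delta>) + K * (m * (2 * \<delta>))"
          using t K0 by (simp add: mult_left_mono)
        also have "\<dots> \<le> T * \<eta> + T * \<delta> + K * m * (2 * \<delta>)"
        proof -
          have "t * (\<eta> + \<delta>) \<le> T * (\<eta> + \<delta>)" using t eta0 \<delta>0 by (intro mult_right_mono) auto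
          then show ?thesis by (simp add: algebra_simps)
        qed
        also have "\<dots> \<le> \<epsilon>" using Te Td Kd by linarith
        finally show ?thesis .
      qed
      have pw: "\<bar>GX s - GY s\<bar> \<le> g s" if s: "s \<in> {0..t}" for s
      proof -
        have sT: "s \<in> {0..T}" "t - s \<in> {0..T}" using s t by auto
        define \<psi> where "\<psi> = transl (t - s) (deriv \<phi>)"
        have \<psi>: "\<psi> \<in> \<Psi>" unfolding \<psi>_def \<Psi>_def by (rule PsiB_mem[OF sT(2) \<phi>])
        obtain u where u: "u \<in> {0..T}" "r u = s" using sT(1) im by (metis imageE)
        have ud: "\<bar>s - u\<bar> \<le> \<delta>" "\<bar>X u \<psi> - Y s \<psi>\<bar> \<le> \<delta>" using r(2) u \<psi> by auto
        have sumge: "0 \<le> (\<Sum>a\<in>A. ind a s)" by (intro sum_nonneg ind0)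
        have d1: "\<bar>X s \<psi> - X u \<psi>\<bar> \<le> \<eta> + K * (\<Sum>a\<in>A. ind a s)"
        proof (cases "s = u")
          case True then show ?thesis using eta0 K0 sumge by simp
        next
          case False
          have sT': "s < T" using time_change_end(2)[OF r(1) T0 u(1)] u(2) False sT by force
          have uT': "u < T"
          proof (rule ccontr)
            assume "\<not> u < T" then have "u = T" using u by auto
            then have "s = T" using u(2) time_change_end(1)[OF r(1) T0] by simp
            then show False using sT' by simp
          qed
          show ?thesis
          proof (cases "\<exists>a\<in>A. min s u < a \<and> a \<le> max s u")
            case True
            then obtain a where a: "a \<in> A" "min s u < a" "a \<le> max s u" by blast
            have "\<bar>s - a\<bar> \<le> \<delta>" using a ud(1) by (auto simp: min_def max_def split: if_splits)
            then have "ind a s = 1" unfolding ind_def by auto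
            then have "1 \<le> (\<Sum>a\<in>A. ind a s)"
              using member_le_sum[of a A "\<lambda>a. ind a s", OF a(1)] ind0 A(1) by simp
            then have "K \<le> K * (\<Sum>a\<in>A. ind a s)" using K0 by (metis mult_left_mono mult.right_neutral)
            moreover have "\<bar>X s \<psi> - X u \<psi>\<bar> \<le> K"
              using XK[OF sT(1) \<psi>] XK[OF u(1) \<psi>] unfolding K_def by linarith
            ultimately show ?thesis using eta0 by linarith
          next
            case False
            then have na: "\<forall>a\<in>A. \<not> (min s u < a \<and> a \<le> max s u)" by blast
            have "\<bar>X (min s u) \<psi> - X (max s u) \<psi>\<bar> \<le> \<eta>"
              using A(2) na sT u \<psi> sT' uT' by (auto simp: min_def max_def)
            then have "\<bar>X s \<psi> - X u \<psi>\<bar> \<le> \<eta>" by (cases "s \<le> u") (auto simp: min_def max_def abs_minus_commute)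
            then show ?thesis using K0 sumge by (smt (verit) mult_nonneg_nonneg)
          qed
        qed
        have "\<bar>GX s - GY s\<bar> = \<bar>(X s \<psi> - X u \<psi>) + (X u \<psi> - Y s \<psi>)\<bar>" unfolding GX_def GY_def \<psi>_def by simp
        also have "\<dots> \<le> \<bar>X s \<psi> - X u \<psi>\<bar> + \<bar>X u \<psi> - Y s \<psi>\<bar>" by (rule abs_triangle_ineq)
        also have "\<dots> \<le> g s" using d1 ud(2) unfolding g_def by linarith
        finally show ?thesis .
      qed
      have "\<bar>integral {0..t} (\<lambda>s. GX s - GY s)\<bar> \<le> integral {0..t} g"
        using integral_norm_bound_integral[OF hk_integrable_diff[OF IX IY] Ig] pw by simp
      moreover have "integral {0..t} (\<lambda>s. GX s - GY s) = integral {0..t} GX - integral {0..t} GY"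
        by (rule hk_integral_diff[OF IX IY])
      moreover have "Nmap X t \<phi> - Nmap Y t \<phi> = - (integral {0..t} GX - integral {0..t} GY)"
        unfolding Nmap_def GX_def GY_def by simp
      ultimately show "\<bar>Nmap X t \<phi> - Nmap Y t \<phi>\<bar> \<le> \<epsilon>" using intg by simp
    qed
  qed
  show ?thesis using Psi \<delta>0 main by blast
qed

theorem proposition4:
  fixes T :: real
  assumes "T > 0"
  shows "continuous_D_to_C T Nmap"
  unfolding continuous_D_to_C_def
  using Nmap_Cpaths[of _ T] Nmap_skorokhod[of _ T] assms by auto


end
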